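(* Let $H$ be a complex Hilbert space and $\{\mathcal{U}(t)\}_{t\geq 0}$ a strongly continuous semigroup on $H$ with generator $\mathcal{L}$. Let $z\in D(\mathcal{L}^\dagger)$ with $z\neq0$, $\mathcal{P}:=(\cdot,z)(z,z)^{-1}z$, $\mathcal{Q}:=1-\mathcal{P}$, and let $x\in H$. Let $f(x,\cdot):\mathbb{R}_+\to\mathbb{C}$ be the unique continuous solution of the Volterra equation $$f(x,t)=(\mathcal{U}(t)\mathcal{Q}x,\mathcal{Q}\mathcal{L}^\dagger z)(z,z)^{-1}-\int_0^tf(x,t-s)\,(\mathcal{U}(s)z,\mathcal{Q}\mathcal{L}^\dagger z)(z,z)^{-1}\,ds,$$ and define $u(x,t):=\mathcal{P}x+\mathcal{U}(t)\mathcal{Q}x-\int_0^tf(x,t-s)\,\mathcal{U}(s)z\,ds$ for $t\ge0$. Then $u(x,\cdot)$ is a mild solution of the abstract Cauchy problem associated to $\overline{\mathcal{QL}}\mathcal{Q}$, i.e. $t\mapsto u(x,t)$ is continuous, and for every $t\ge0$, $\int_0^tu(x,s)\,ds\in D(\overline{\mathcal{QL}}\mathcal{Q})$ and $u(x,t)=x+\overline{\mathcal{QL}}\mathcal{Q}\int_0^tu(x,s)\,ds$.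
   Context: The scalar product $(\cdot,\cdot)$ on $H$ is conjugate-linear in its second argument. The generator is $\mathcal{L}x:=\lim_{h\searrow 0}\frac1h[\mathcal{U}(h)x-x]$ on the set $D(\mathcal{L})$ where the limit exists; $\dagger$ denotes the adjoint, the overbar the closure (the operator $\mathcal{QL}$ is closable under these assumptions); $D(\overline{\mathcal{QL}}\mathcal{Q})=\{y:\mathcal{Q}y\in D(\overline{\mathcal{QL}})\}$. Integrals are Bochner integrals. *)

theory Defs
  imports "HOL-Analysis.Analysis"
begin

class cvector = real_vector +
  fixes scaleC :: "complex \<Rightarrow> 'a \<Rightarrow> 'a" (infixr \<open>*\<^sub>C\<close> 75)
  assumes scaleC_add_right: "a *\<^sub>C (x + y) = a *\<^sub>C x + a *\<^sub>C y"
    and scaleC_add_left: "(a + b) *\<^sub>C x = a *\<^sub>C x + b *\<^sub>C x"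
    and scaleC_scaleC: "a *\<^sub>C (b *\<^sub>C x) = (a * b) *\<^sub>C x"
    and scaleC_one: "1 *\<^sub>C x = x"
    and scaleR_scaleC: "r *\<^sub>R x = complex_of_real r *\<^sub>C x"

class chilbert = cvector + banach +
  fixes cinner :: "'a \<Rightarrow> 'a \<Rightarrow> complex"
  assumes cinner_commute: "cinner x y = cnj (cinner y x)"
    and cinner_add_left: "cinner (x + y) w = cinner x w + cinner y w"
    and cinner_scaleC_left: "cinner (a *\<^sub>C x) y = a * cinner x y"
    and cinner_nonneg: "0 \<le> Re (cinner x x)"
    and cinner_eq_zero_iff: "cinner x x = 0 \<longleftrightarrow> x = 0"
    and norm_eq_sqrt_cinner: "norm x = sqrt (Re (cinner x x))"

definition clinear_bounded :: "('a::chilbert \<Rightarrow> 'a) \<Rightarrow> bool" where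
  "clinear_bounded T \<longleftrightarrow> bounded_linear T \<and> (\<forall>c x. T (c *\<^sub>C x) = c *\<^sub>C T x)"

definition C0_semigroup :: "(real \<Rightarrow> 'a::chilbert \<Rightarrow> 'a) \<Rightarrow> bool" where
  "C0_semigroup U \<longleftrightarrow>
     (\<forall>t\<ge>0. clinear_bounded (U t)) \<and>
     U 0 = id \<and>
     (\<forall>s\<ge>0. \<forall>t\<ge>0. U (s + t) = U s \<circ> U t) \<and>
     (\<forall>x. continuous_on {0..} (\<lambda>t. U t x))"

definition generator_graph :: "(real \<Rightarrow> 'a::chilbert \<Rightarrow> 'a) \<Rightarrow> ('a \<times> 'a) set" where
  "generator_graph U = {(x, y). ((\<lambda>h. (1 / h) *\<^sub>R (U h x - x)) \<longlongrightarrow> y) (at_right 0)}"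

definition adjoint_graph :: "('a::chilbert \<times> 'a) set \<Rightarrow> ('a \<times> 'a) set" where
  "adjoint_graph G = {(y, y'). \<forall>(x, v)\<in>G. cinner v y = cinner x y'}"

definition op_of :: "('a \<times> 'b) set \<Rightarrow> 'a \<Rightarrow> 'b" where
  "op_of G x = (THE y. (x, y) \<in> G)"

definition projP :: "'a::chilbert \<Rightarrow> 'a \<Rightarrow> 'a" where
  "projP z v = (cinner v z / cinner z z) *\<^sub>C z"

definition projQ :: "'a::chilbert \<Rightarrow> 'a \<Rightarrow> 'a" where
  "projQ z v = v - projP z v"

definition QL_graph :: "(real \<Rightarrow> 'a::chilbert \<Rightarrow> 'a) \<Rightarrow> 'a \<Rightarrow> ('a \<times> 'a) set" where
  "QL_graph U z = {(x, projQ z y) | x y. (x, y) \<in> generator_graph U}"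

end

theory Submission
  imports Defs
begin


lemma scaleC_zero_left[simp]: "(0::complex) *\<^sub>C (x::'a::cvector) = 0"
  by (metis add_cancel_right_right add_0 scaleC_add_left)
lemma scaleC_zero_right[simp]: "(a::complex) *\<^sub>C (0::'a::cvector) = 0"
  by (metis add_cancel_right_right add_0 scaleC_add_right)
lemma scaleC_minus_left: "(- a) *\<^sub>C (x::'a::cvector) = - (a *\<^sub>C x)"
proof -
  have "(- a) *\<^sub>C x + a *\<^sub>C x = 0" by (simp add: scaleC_add_left[symmetric])
  then show ?thesis by (simp add: eq_neg_iff_add_eq_0)
qed
lemma scaleC_minus_right: "a *\<^sub>C (- x::'a::cvector) = - (a *\<^sub>C x)"
proof -
  have "a *\<^sub>C (- x) + a *\<^sub>C x = 0" by (simp add: scaleC_add_right[symmetric])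
  then show ?thesis by (simp add: eq_neg_iff_add_eq_0)
qed
lemma scaleC_diff_left: "(a - b) *\<^sub>C (x::'a::cvector) = a *\<^sub>C x - b *\<^sub>C x"
  by (simp only: diff_conv_add_uminus scaleC_add_left scaleC_minus_left)
lemma scaleC_diff_right: "a *\<^sub>C (x - y::'a::cvector) = a *\<^sub>C x - a *\<^sub>C y"
  by (simp only: diff_conv_add_uminus scaleC_add_right scaleC_minus_right)
lemma scaleC_scaleR_comm: "a *\<^sub>C (r *\<^sub>R (x::'a::cvector)) = r *\<^sub>R (a *\<^sub>C x)"
  by (simp only: scaleR_scaleC scaleC_scaleC mult.commute)
lemma scaleC_sum_right: "a *\<^sub>C (sum f A) = (\<Sum>i\<in>A. a *\<^sub>C (f i::'a::cvector))"
  by (induction A rule: infinite_finite_induct) (auto simp: scaleC_add_right)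

lemma cinner_zero_left[simp]: "cinner 0 (y::'a::chilbert) = 0"
proof -
  have "cinner 0 y = cinner 0 y + cinner 0 y" using cinner_add_left[of 0 0 y] by simp
  then show ?thesis by simp
qed
lemma cinner_add_right: "cinner (x::'a::chilbert) (y + w) = cinner x y + cinner x w"
  by (subst (1 2 3) cinner_commute) (simp add: cinner_add_left)
lemma cinner_zero_right[simp]: "cinner (x::'a::chilbert) 0 = 0"
  by (subst cinner_commute) simp
lemma cinner_scaleC_right: "cinner (x::'a::chilbert) (a *\<^sub>C y) = cnj a * cinner x y"
  by (subst (1 2) cinner_commute) (simp add: cinner_scaleC_left)
lemma neg_scaleC: "- (x::'a::cvector) = (-1) *\<^sub>C x"
  by (simp only: scaleC_minus_left scaleC_one)
lemma cinner_minus_left: "cinner (- x::'a::chilbert) y = - cinner x y"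
  by (simp only: neg_scaleC[of x] cinner_scaleC_left) simp
lemma cinner_minus_right: "cinner (x::'a::chilbert) (- y) = - cinner x y"
  by (simp only: neg_scaleC[of y] cinner_scaleC_right) simp
lemma cinner_diff_left: "cinner (x - w::'a::chilbert) y = cinner x y - cinner w y"
  by (simp only: diff_conv_add_uminus cinner_add_left cinner_minus_left)
lemma cinner_diff_right: "cinner (x::'a::chilbert) (y - w) = cinner x y - cinner x w"
  by (simp only: diff_conv_add_uminus cinner_add_right cinner_minus_right)
lemma cinner_scaleR_left: "cinner (r *\<^sub>R x::'a::chilbert) y = of_real r * cinner x y"
  by (simp add: scaleR_scaleC cinner_scaleC_left)
lemma cinner_scaleR_right: "cinner (x::'a::chilbert) (r *\<^sub>R y) = of_real r * cinner x y"
  by (simp add: scaleR_scaleC cinner_scaleC_right)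

lemma cinner_self: "cinner (x::'a::chilbert) x = of_real ((norm x)\<^sup>2)"
proof -
  have "cinner x x = cnj (cinner x x)" by (rule cinner_commute)
  then have "Im (cinner x x) = - Im (cinner x x)" by (metis cnj.simps(2))
  then have "Im (cinner x x) = 0" by simp
  moreover have "Re (cinner x x) = (norm x)\<^sup>2"
    using norm_eq_sqrt_cinner[of x] cinner_nonneg[of x] by simp
  ultimately show ?thesis by (simp add: complex_eq_iff)
qed

lemma cauchy_schwarz: "cmod (cinner (x::'a::chilbert) y) \<le> norm x * norm y"
proof (cases "y = 0")
  case True then show ?thesis by simp
next
  case False
  define c where "c = cinner y y"
  define p where "p = cinner x y"
  define l where "l = p / c"
  have c: "c = of_real ((norm y)\<^sup>2)" "norm y > 0" using False by (auto simp: c_def cinner_self)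
  have cc: "c \<noteq> 0" "cnj c = c" using c by auto
  have "0 \<le> Re (cinner (x - l *\<^sub>C y) (x - l *\<^sub>C y))" by (rule cinner_nonneg)
  also have "cinner (x - l *\<^sub>C y) (x - l *\<^sub>C y) = cinner x x - cnj l * p - l * cnj p + l * cnj l * c"
    by (simp add: cinner_diff_left cinner_diff_right cinner_scaleC_left cinner_scaleC_right c_def p_def
        cinner_commute[of y x] algebra_simps)
  also have "\<dots> = cinner x x - p * cnj p / c"
    unfolding l_def using cc by (simp add: complex_cnj_divide field_simps)
  also have "\<dots> = of_real ((norm x)\<^sup>2 - (cmod p)\<^sup>2 / (norm y)\<^sup>2)"
    by (simp add: cinner_self c complex_norm_square[symmetric])
  finally have "(cmod p)\<^sup>2 / (norm y)\<^sup>2 \<le> (norm x)\<^sup>2" by simp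
  then have "(cmod p)\<^sup>2 \<le> (norm x * norm y)\<^sup>2" using c by (simp add: field_simps power_mult_distrib)
  then show ?thesis unfolding p_def by (simp add: power2_le_iff_abs_le)
qed

lemma norm_scaleC: "norm (a *\<^sub>C (x::'a::chilbert)) = cmod a * norm x"
proof -
  have "cinner (a *\<^sub>C x) (a *\<^sub>C x) = (a * cnj a) * cinner x x"
    by (simp add: cinner_scaleC_left cinner_scaleC_right mult.assoc)
  then have "of_real ((norm (a *\<^sub>C x))\<^sup>2) = (of_real ((cmod a)\<^sup>2) * of_real ((norm x)\<^sup>2) :: complex)"
    by (simp only: cinner_self complex_norm_square[symmetric])
  then have "of_real ((norm (a *\<^sub>C x))\<^sup>2) = (of_real ((cmod a * norm x)\<^sup>2) :: complex)"
    by (simp only: power_mult_distrib of_real_mult)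
  then have "(norm (a *\<^sub>C x))\<^sup>2 = (cmod a * norm x)\<^sup>2"
    by (simp only: of_real_eq_iff)
  then show ?thesis by (simp add: power2_eq_iff_nonneg)
qed

lemma bounded_linear_cinner_left: "bounded_linear (\<lambda>x::'a::chilbert. cinner x y)"
proof (rule bounded_linear_intro[where K="norm y"])
  show "cinner (x1 + x2) y = cinner x1 y + cinner x2 y" for x1 x2 by (rule cinner_add_left)
  show "cinner (r *\<^sub>R x) y = r *\<^sub>R cinner x y" for r x by (simp add: cinner_scaleR_left scaleR_conv_of_real)
  show "norm (cinner x y) \<le> norm x * norm y" for x by (rule cauchy_schwarz)
qed

lemma bounded_linear_cinner_right: "bounded_linear (\<lambda>y::'a::chilbert. cinner x y)"
proof (rule bounded_linear_intro[where K="norm x"])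
  show "cinner x (x1 + x2) = cinner x x1 + cinner x x2" for x1 x2 by (rule cinner_add_right)
  show "cinner x (r *\<^sub>R y) = r *\<^sub>R cinner x y" for r y by (simp add: cinner_scaleR_right scaleR_conv_of_real)
  show "norm (cinner x y) \<le> norm y * norm x" for y using cauchy_schwarz[of x y] by (simp add: mult.commute)
qed

lemma bounded_linear_scaleC: "bounded_linear (\<lambda>x::'a::chilbert. a *\<^sub>C x)"
proof (rule bounded_linear_intro[where K="cmod a"])
  show "a *\<^sub>C (x1 + x2) = a *\<^sub>C x1 + a *\<^sub>C x2" for x1 x2 by (rule scaleC_add_right)
  show "a *\<^sub>C (r *\<^sub>R x) = r *\<^sub>R (a *\<^sub>C x)" for r x by (rule scaleC_scaleR_comm)
  show "norm (a *\<^sub>C x) \<le> norm x * cmod a" for x :: 'a by (simp add: norm_scaleC mult.commute)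
qed

lemma bounded_bilinear_scaleC: "bounded_bilinear (\<lambda>a (x::'a::chilbert). a *\<^sub>C x)"
proof (rule bounded_bilinear.intro)
  show "(a + a') *\<^sub>C b = a *\<^sub>C b + a' *\<^sub>C b" for a a' and b :: 'a by (rule scaleC_add_left)
  show "a *\<^sub>C (b + b') = a *\<^sub>C b + a *\<^sub>C b'" for a and b b' :: 'a by (rule scaleC_add_right)
  show "(r *\<^sub>R a) *\<^sub>C b = r *\<^sub>R (a *\<^sub>C b)" for r a and b :: 'a
    by (simp add: scaleR_scaleC scaleC_scaleC scaleR_conv_of_real)
  show "a *\<^sub>C (r *\<^sub>R b) = r *\<^sub>R (a *\<^sub>C b)" for r a and b :: 'a by (rule scaleC_scaleR_comm)
  show "\<exists>K. \<forall>a (b::'a). norm (a *\<^sub>C b) \<le> norm a * norm b * K"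
    by (rule exI[where x=1]) (simp add: norm_scaleC)
qed

lemma cinner_eq_zero_all: "(\<And>y. cinner x y = 0) \<Longrightarrow> (x::'a::chilbert) = 0"
  using cinner_eq_zero_iff by blast



lemma cont_int: "continuous_on {a..b} (g::real \<Rightarrow> 'a::banach) \<Longrightarrow> g integrable_on {a..b}"
  by (rule integrable_continuous_real)

lemma integral_bl:
  assumes "bounded_linear T" "g integrable_on S"
  shows "T (integral S g) = integral S (\<lambda>s. T (g s))"
  using integral_linear[OF assms(2,1)] by (simp add: o_def)

lemma integral_cinner_left:
  assumes "(g::real \<Rightarrow> 'a::chilbert) integrable_on S"
  shows "cinner (integral S g) y = integral S (\<lambda>s. cinner (g s) y)"
  using integral_bl[OF bounded_linear_cinner_left assms] .

lemma integral_scaleC: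
  assumes "(g::real \<Rightarrow> 'a::chilbert) integrable_on S"
  shows "c *\<^sub>C integral S g = integral S (\<lambda>s. c *\<^sub>C g s)"
  using integral_bl[OF bounded_linear_scaleC assms] .

lemma mean_limit:
  fixes g :: "real \<Rightarrow> 'a::banach"
  assumes g: "continuous_on {0..} g" and s: "s \<ge> 0"
  shows "((\<lambda>h. (1/h) *\<^sub>R integral {s..s+h} g) \<longlongrightarrow> g s) (at_right 0)"
proof (rule tendstoI)
  fix e :: real assume e: "e > 0"
  have "continuous (at s within {0..}) g" using g s by (simp add: continuous_on_eq_continuous_within)
  then obtain d where d: "d > 0" "\<And>x. x \<in> {0..} \<Longrightarrow> dist x s < d \<Longrightarrow> dist (g x) (g s) < e/2"
    using e unfolding continuous_within_eps_delta by (meson half_gt_zero)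
  show "\<forall>\<^sub>F h in at_right 0. dist ((1/h) *\<^sub>R integral {s..s+h} g) (g s) < e"
    unfolding eventually_at_right_field
  proof (intro exI[of _ d] conjI allI impI)
    show "0 < d" by fact
    fix h :: real assume h: "0 < h" "h < d"
    have cg: "continuous_on {s..s+h} g" using continuous_on_subset[OF g] s by auto
    have i1: "integral {s..s+h} g - h *\<^sub>R g s = integral {s..s+h} (\<lambda>x. g x - g s)"
      using h by (subst integral_diff) (auto intro!: cont_int cg)
    have "norm (integral {s..s+h} (\<lambda>x. g x - g s)) \<le> (e/2) * (s + h - s)"
    proof (rule integral_bound)
      show "continuous_on {s..s + h} (\<lambda>x. g x - g s)" by (intro continuous_intros cg)
      fix x assume "x \<in> {s..s+h}"
      then show "norm (g x - g s) \<le> e/2" using d(2)[of x] h s by (auto simp: dist_norm)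
    qed (use h in auto)
    then have "norm ((1/h) *\<^sub>R integral {s..s+h} g - g s) \<le> e/2"
    proof -
      have "(1/h) *\<^sub>R integral {s..s+h} g - g s = (1/h) *\<^sub>R (integral {s..s+h} g - h *\<^sub>R g s)"
        using h by (simp add: algebra_simps)
      moreover assume "norm (integral {s..s+h} (\<lambda>x. g x - g s)) \<le> (e/2) * (s + h - s)"
      ultimately show ?thesis using h i1 by (simp add: field_simps)
    qed
    then show "dist ((1/h) *\<^sub>R integral {s..s+h} g) (g s) < e" using e by (simp add: dist_norm)
  qed
qed

lemma right_deriv_zero_const:
  fixes chi :: "real \<Rightarrow> 'a::real_normed_vector"
  assumes b: "b \<ge> 0" and c: "continuous_on {0..b} chi"
    and d: "\<And>t. 0 \<le> t \<Longrightarrow> t < b \<Longrightarrow> ((\<lambda>h. (1/h) *\<^sub>R (chi (t+h) - chi t)) \<longlongrightarrow> 0) (at_right 0)"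
  shows "chi b = chi 0"
proof -
  have "norm (chi b - chi 0) \<le> e * b" if e: "e > 0" for e
  proof -
    define S where "S = {t \<in> {0..b}. norm (chi t - chi 0) \<le> e * t}"
    have cl: "closed S" unfolding S_def
      by (intro continuous_on_closed_Collect_le continuous_intros c)
    have ne: "0 \<in> S" using b by (simp add: S_def)
    have bd: "bdd_above S" unfolding S_def by (auto intro: bdd_aboveI[of _ b])
    define m where "m = Sup S"
    have mS: "m \<in> S" unfolding m_def using closed_contains_Sup[OF _ bd cl] ne by blast
    have "m = b"
    proof (rule ccontr)
      assume "m \<noteq> b"
      then have mb: "0 \<le> m" "m < b" using mS by (auto simp: S_def)
      from tendstoD[OF d[OF mb] e]
      obtain q where q: "q > 0" "\<And>h. 0 < h \<Longrightarrow> h < q \<Longrightarrow> dist ((1/h) *\<^sub>R (chi (m+h) - chi m)) 0 < e"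
        unfolding eventually_at_right_field by auto
      define h where "h = min (q/2) (b - m)"
      have h: "0 < h" "h < q" "m + h \<le> b" using q mb by (auto simp: h_def)
      have "norm ((1/h) *\<^sub>R (chi (m+h) - chi m)) < e" using q(2)[OF h(1,2)] by (simp only: dist_norm diff_zero)
      then have "(1/h) * norm (chi (m+h) - chi m) < e" using h by (simp only: norm_scaleR) simp
      then have "norm (chi (m+h) - chi m) < e * h" using h by (simp add: field_simps)
      moreover have "norm (chi m - chi 0) \<le> e * m" using mS by (simp add: S_def)
      ultimately have "norm (chi (m+h) - chi 0) \<le> e * (m + h)"
        using norm_triangle_ineq[of "chi (m+h) - chi m" "chi m - chi 0"] by (simp add: algebra_simps)
      then have "m + h \<in> S" using h mb by (simp add: S_def)
      then have "m + h \<le> m" unfolding m_def using bd by (rule cSup_upper)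
      then show False using h by simp
    qed
    then show ?thesis using mS by (simp add: S_def)
  qed
  then have "norm (chi b - chi 0) \<le> 0"
  proof (cases "b = 0")
    case False
    then have "norm (chi b - chi 0) \<le> e" if "e > 0" for e
      using \<open>\<And>e. e > 0 \<Longrightarrow> _\<close>[of "e / b"] that b by simp
    then show ?thesis by (meson dense not_le)
  qed simp
  then show ?thesis by simp
qed



locale c0sg =
  fixes U :: "real \<Rightarrow> 'a::chilbert \<Rightarrow> 'a"
  assumes sg: "C0_semigroup U"
begin

lemma bl: "t \<ge> 0 \<Longrightarrow> bounded_linear (U t)"
  using sg by (auto simp: C0_semigroup_def clinear_bounded_def)
lemma homC: "t \<ge> 0 \<Longrightarrow> U t (c *\<^sub>C x) = c *\<^sub>C U t x"
  using sg by (auto simp: C0_semigroup_def clinear_bounded_def)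
lemma U0[simp]: "U 0 x = x"
  using sg by (auto simp: C0_semigroup_def)
lemma Uadd: "s \<ge> 0 \<Longrightarrow> t \<ge> 0 \<Longrightarrow> U (s + t) x = U s (U t x)"
  using sg by (auto simp: C0_semigroup_def)
lemma cont: "continuous_on {0..} (\<lambda>t. U t x)"
  using sg by (auto simp: C0_semigroup_def)
lemma cont_sub: "0 \<le> a \<Longrightarrow> continuous_on {a..b} (\<lambda>t. U t x)"
  by (rule continuous_on_subset[OF cont]) auto
lemma int_ok: "0 \<le> a \<Longrightarrow> (\<lambda>t. U t x) integrable_on {a..b}"
  by (rule cont_int[OF cont_sub])
lemma U_diff: "t \<ge> 0 \<Longrightarrow> U t (x - y) = U t x - U t y"
  using bl linear_diff bounded_linear.linear by blast
lemma U_add: "t \<ge> 0 \<Longrightarrow> U t (x + y) = U t x + U t y"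
  using bl linear_add bounded_linear.linear by blast
lemma U_scaleR: "t \<ge> 0 \<Longrightarrow> U t (r *\<^sub>R x) = r *\<^sub>R U t x"
  using bl linear_scale bounded_linear.linear by blast
lemma U_zero[simp]: "t \<ge> 0 \<Longrightarrow> U t 0 = 0"
  using bl linear_0 bounded_linear.linear by blast

definition R :: "'a \<Rightarrow> 'a \<Rightarrow> bool" where
  "R y v \<longleftrightarrow> (\<forall>h>0. U h y - y = integral {0..h} (\<lambda>s. U s v))"

lemma R_gen: assumes "R y v" shows "(y, v) \<in> generator_graph U"
proof -
  have "((\<lambda>h. (1/h) *\<^sub>R integral {0..0+h} (\<lambda>s. U s v)) \<longlongrightarrow> U 0 v) (at_right 0)"
    by (rule mean_limit[OF cont]) simp
  then have "((\<lambda>h. (1/h) *\<^sub>R (U h y - y)) \<longlongrightarrow> v) (at_right 0)"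
  proof (subst tendsto_cong)
    show "\<forall>\<^sub>F h in at_right 0. (1/h) *\<^sub>R (U h y - y) = (1/h) *\<^sub>R integral {0..0+h} (\<lambda>s. U s v)"
      unfolding eventually_at_right_field using assms by (auto simp: R_def intro!: exI[of _ 1])
  qed simp
  then show ?thesis by (simp add: generator_graph_def)
qed

lemma INT: assumes t: "t \<ge> 0" shows "R (integral {0..t} (\<lambda>s. U s y)) (U t y - y)"
  unfolding R_def
proof (intro allI impI)
  fix h :: real assume h: "h > 0"
  have "U h (integral {0..t} (\<lambda>s. U s y)) = integral {0..t} (\<lambda>s. U h (U s y))"
    by (rule integral_bl[OF bl int_ok]) (use h in auto)
  also have "\<dots> = integral {0..t} (\<lambda>s. U (s + h) y)"
    by (rule integral_cong) (use h in \<open>auto simp: Uadd[symmetric] add.commute\<close>)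
  also have "\<dots> = integral {h..t+h} (\<lambda>s. U s y)"
    using integral_shift_real_ivl[where f="\<lambda>s. U s y" and a=h and b="t+h" and c=h] by simp
  finally have e1: "U h (integral {0..t} (\<lambda>s. U s y)) = integral {h..t+h} (\<lambda>s. U s y)" .
  have c1: "integral {0..h} (\<lambda>s. U s y) + integral {h..t+h} (\<lambda>s. U s y) = integral {0..t+h} (\<lambda>s. U s y)"
    by (rule Henstock_Kurzweil_Integration.integral_combine) (use h t in \<open>auto intro: int_ok\<close>)
  have c2: "integral {0..t} (\<lambda>s. U s y) + integral {t..t+h} (\<lambda>s. U s y) = integral {0..t+h} (\<lambda>s. U s y)"
    by (rule Henstock_Kurzweil_Integration.integral_combine) (use h t in \<open>auto intro: int_ok\<close>)
  have e2: "integral {t..t+h} (\<lambda>s. U s y) = integral {0..h} (\<lambda>s. U s (U t y))"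
  proof -
    have "integral {t..t+h} (\<lambda>s. U s y) = integral {t-t..t+h-t} (\<lambda>s. U (s + t) y)"
      using integral_shift_real_ivl[where f="\<lambda>s. U s y" and a=t and b="t+h" and c=t] by simp
    also have "\<dots> = integral {0..h} (\<lambda>s. U s (U t y))"
      by simp (rule integral_cong, use t in \<open>auto simp: Uadd\<close>)
    finally show ?thesis .
  qed
  have "U h (integral {0..t} (\<lambda>s. U s y)) - integral {0..t} (\<lambda>s. U s y)
      = integral {0..h} (\<lambda>s. U s (U t y)) - integral {0..h} (\<lambda>s. U s y)"
    using e1 c1 c2 e2 by (simp add: algebra_simps)
  also have "\<dots> = integral {0..h} (\<lambda>s. U s (U t y) - U s y)"
    by (rule integral_diff[symmetric]) (auto intro: int_ok)
  also have "\<dots> = integral {0..h} (\<lambda>s. U s (U t y - y))"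
    by (rule integral_cong) (auto simp: U_diff)
  finally show "U h (integral {0..t} (\<lambda>s. U s y)) - integral {0..t} (\<lambda>s. U s y) = integral {0..h} (\<lambda>s. U s (U t y - y))" .
qed

lemma gen_R: assumes g: "(y, v) \<in> generator_graph U" shows "R y v"
  unfolding R_def
proof (intro allI impI)
  fix b :: real assume b: "b > 0"
  define chi where "chi t = U t y - integral {0..t} (\<lambda>s. U s v)" for t
  have lim: "((\<lambda>h. (1/h) *\<^sub>R (U h y - y)) \<longlongrightarrow> v) (at_right 0)"
    using g by (simp add: generator_graph_def)
  have "chi b = chi 0"
  proof (rule right_deriv_zero_const)
    show "0 \<le> b" using b by simp
    show "continuous_on {0..b} chi" unfolding chi_def
      by (intro continuous_intros cont_sub indefinite_integral_continuous_1 int_ok) simp_all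
    fix t :: real assume t: "0 \<le> t" "t < b"
    have l1: "((\<lambda>h. U t ((1/h) *\<^sub>R (U h y - y))) \<longlongrightarrow> U t v) (at_right 0)"
      by (rule bounded_linear.tendsto[OF bl lim]) (use t in simp)
    have l2: "((\<lambda>h. (1/h) *\<^sub>R integral {t..t+h} (\<lambda>s. U s v)) \<longlongrightarrow> U t v) (at_right 0)"
      by (rule mean_limit[OF cont t(1)])
    have "((\<lambda>h. U t ((1/h) *\<^sub>R (U h y - y)) - (1/h) *\<^sub>R integral {t..t+h} (\<lambda>s. U s v)) \<longlongrightarrow> U t v - U t v) (at_right 0)"
      by (rule tendsto_diff[OF l1 l2])
    then show "((\<lambda>h. (1/h) *\<^sub>R (chi (t+h) - chi t)) \<longlongrightarrow> 0) (at_right 0)"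
    proof (subst tendsto_cong)
      show "\<forall>\<^sub>F h in at_right 0. (1/h) *\<^sub>R (chi (t+h) - chi t) =
          U t ((1/h) *\<^sub>R (U h y - y)) - (1/h) *\<^sub>R integral {t..t+h} (\<lambda>s. U s v)"
        unfolding eventually_at_right_field
      proof (intro exI[of _ 1] conjI allI impI)
        fix h :: real assume h: "0 < h" "h < 1"
        have c: "integral {0..t} (\<lambda>s. U s v) + integral {t..t+h} (\<lambda>s. U s v) = integral {0..t+h} (\<lambda>s. U s v)"
          by (rule Henstock_Kurzweil_Integration.integral_combine) (use h t in \<open>auto intro: int_ok\<close>)
        have "U (t+h) y = U t (U h y)" using Uadd[of t h y] h t by simp
        then show "(1/h) *\<^sub>R (chi (t+h) - chi t) =
          U t ((1/h) *\<^sub>R (U h y - y)) - (1/h) *\<^sub>R integral {t..t+h} (\<lambda>s. U s v)"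
          unfolding chi_def using c t
          by (simp add: U_scaleR U_diff algebra_simps flip: scaleR_diff_right)
      qed simp
    qed simp
  qed
  then show "U b y - y = integral {0..b} (\<lambda>s. U s v)" by (simp add: chi_def algebra_simps)
qed

end


context c0sg begin

lemma ubound: assumes T: "T \<ge> 0" shows "\<exists>M>0. \<forall>s\<in>{0..T}. \<forall>x. norm (U s x) \<le> M * norm x"
proof -
  define E where "E n = {x. \<forall>s\<in>{0..T}. norm (U s x) \<le> real n}" for n :: nat
  have clE: "closed (E n)" for n
  proof -
    have "E n = (\<Inter>s\<in>{0..T}. {x. norm (U s x) \<le> real n})" by (auto simp: E_def)
    moreover have "closed {x. norm (U s x) \<le> real n}" if "s \<in> {0..T}" for s
    proof (rule closed_Collect_le)
      show "continuous_on UNIV (\<lambda>x. norm (U s x))"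
        by (rule continuous_on_norm, rule linear_continuous_on, rule bl) (use that in auto)
    qed simp
    ultimately show ?thesis by auto
  qed
  have cover: "(\<Union>n. E n) = UNIV"
  proof safe
    fix x
    have "compact ((\<lambda>s. U s x) ` {0..T})" by (rule compact_continuous_image[OF cont_sub]) auto
    then have "bounded ((\<lambda>s. U s x) ` {0..T})" by (rule compact_imp_bounded)
    then obtain B where B0: "\<forall>y\<in>(\<lambda>s. U s x) ` {0..T}. norm y \<le> B" unfolding bounded_iff by (elim exE)
    have B: "norm (U s x) \<le> B" if "s \<in> {0..T}" for s using B0 that by blast
    have "x \<in> E (nat \<lceil>B\<rceil>)" unfolding E_def
      using B by (auto intro: order_trans[OF _ real_nat_ceiling_ge])
    then show "x \<in> (\<Union>n. E n)" by blast
  qed simp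
  have "\<exists>n. interior (E n) \<noteq> {}"
  proof (rule ccontr)
    assume "\<not> ?thesis"
    then have ie: "interior (E n) = {}" for n by blast
    have "euclidean interior_of \<Union>(range E) = {}"
    proof (rule Baire_category_alt)
      show "completely_metrizable_space (euclidean :: 'a topology) \<or> locally_compact_space (euclidean :: 'a topology) \<and> regular_space (euclidean :: 'a topology)"
        by (rule disjI1, rule completely_metrizable_space_euclidean)
      show "countable (range E)" by (rule countable_image) simp
      fix S assume "S \<in> range E"
      then obtain n where Sn: "S = E n" by blast
      have "closedin euclidean (E n)" using clE[of n] by (simp only: closed_closedin)
      moreover have "euclidean interior_of (E n) = {}" using ie[of n] by (simp only: euclidean_interior_of)
      ultimately show "closedin euclidean S \<and> euclidean interior_of S = {}" using Sn by simp
    qed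
    then show False using cover by simp
  qed
  then obtain n x0 where "x0 \<in> interior (E n)" by blast
  then obtain r where r: "r > 0" "ball x0 r \<subseteq> E n" by (meson mem_interior)
  have x0: "x0 \<in> E n" by (rule subsetD[OF r(2)]) (simp add: r(1))
  define M where "M = 4 * real n / r + 1"
  have M: "M > 0" unfolding M_def using r(1) by (intro add_nonneg_pos divide_nonneg_pos) auto
  have "norm (U s y) \<le> M * norm y" if s: "s \<in> {0..T}" for s y
  proof (cases "y = 0")
    case True then show ?thesis using s by simp
  next
    case False
    define c where "c = (r/2) / norm y"
    have c: "c > 0" using r False by (simp add: c_def)
    have "x0 + c *\<^sub>R y \<in> ball x0 r" using r False by (simp add: c_def dist_norm)
    then have "norm (U s (x0 + c *\<^sub>R y)) \<le> real n" using r s by (auto simp: E_def)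
    moreover have "norm (U s x0) \<le> real n" using x0 s by (auto simp: E_def)
    ultimately have "norm (U s (c *\<^sub>R y)) \<le> 2 * real n"
      using norm_triangle_ineq4[of "U s (x0 + c *\<^sub>R y)" "U s x0"] s by (simp add: U_add)
    then have "c * norm (U s y) \<le> 2 * real n" using s c by (simp add: U_scaleR)
    then have "norm (U s y) \<le> 2 * real n / c" using c by (simp add: field_simps)
    also have "\<dots> = 4 * real n / r * norm y" using r False by (simp add: c_def field_simps)
    also have "\<dots> \<le> M * norm y" by (simp add: M_def algebra_simps)
    finally show ?thesis .
  qed
  then show ?thesis using M by blast
qed

lemma R_lim:
  assumes xn: "xn \<longlonglongrightarrow> x" and vn: "vn \<longlonglongrightarrow> v" and R: "\<And>n. R (xn n) (vn n)"
  shows "R x v"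
  unfolding R_def
proof (intro allI impI)
  fix h :: real assume h: "h > 0"
  obtain M where M: "M > 0" "\<And>s x. s \<in> {0..h} \<Longrightarrow> norm (U s x) \<le> M * norm x"
    using ubound[of h] h by auto
  have l1: "(\<lambda>n. U h (xn n) - xn n) \<longlonglongrightarrow> U h x - x"
    by (intro tendsto_diff xn bounded_linear.tendsto[OF bl]) (use h in simp)
  have "(\<lambda>n. integral {0..h} (\<lambda>s. U s (vn n)) - integral {0..h} (\<lambda>s. U s v)) \<longlonglongrightarrow> 0"
  proof (rule Lim_null_comparison)
    show "\<forall>\<^sub>F n in sequentially. norm (integral {0..h} (\<lambda>s. U s (vn n)) - integral {0..h} (\<lambda>s. U s v))
        \<le> M * h * norm (vn n - v)"
    proof (intro always_eventually allI)
      fix n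
      have "integral {0..h} (\<lambda>s. U s (vn n)) - integral {0..h} (\<lambda>s. U s v) = integral {0..h} (\<lambda>s. U s (vn n - v))"
        by (subst integral_diff[symmetric]) (auto intro!: int_ok integral_cong simp: U_diff)
      also have "norm \<dots> \<le> (M * norm (vn n - v)) * (h - 0)"
        by (rule integral_bound) (use h M in \<open>auto intro: cont_sub\<close>)
      finally show "norm (integral {0..h} (\<lambda>s. U s (vn n)) - integral {0..h} (\<lambda>s. U s v))
        \<le> M * h * norm (vn n - v)" by (simp add: algebra_simps)
    qed
    have "(\<lambda>n. M * h * norm (vn n - v)) \<longlonglongrightarrow> M * h * norm (v - v)"
      by (intro tendsto_intros vn)
    then show "(\<lambda>n. M * h * norm (vn n - v)) \<longlonglongrightarrow> 0" by simp
  qed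
  then have l2: "(\<lambda>n. integral {0..h} (\<lambda>s. U s (vn n))) \<longlonglongrightarrow> integral {0..h} (\<lambda>s. U s v)"
    by (simp add: LIM_zero_iff)
  have "(\<lambda>n. U h (xn n) - xn n) = (\<lambda>n. integral {0..h} (\<lambda>s. U s (vn n)))"
    using R h by (auto simp: R_def)
  with l1 have "(\<lambda>n. integral {0..h} (\<lambda>s. U s (vn n))) \<longlonglongrightarrow> U h x - x" by simp
  from LIMSEQ_unique[OF this l2] show "U h x - x = integral {0..h} (\<lambda>s. U s v)" .
qed

lemma closed_gen: "closed (generator_graph U)"
  unfolding closed_sequential_limits
proof (intro allI impI, elim conjE)
  fix p :: "nat \<Rightarrow> 'a \<times> 'a" and l assume p: "\<forall>n. p n \<in> generator_graph U" "p \<longlonglongrightarrow> l"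
  have "R (fst l) (snd l)"
  proof (rule R_lim)
    show "(\<lambda>n. fst (p n)) \<longlonglongrightarrow> fst l" by (intro tendsto_fst p)
    show "(\<lambda>n. snd (p n)) \<longlonglongrightarrow> snd l" by (intro tendsto_snd p)
    show "R (fst (p n)) (snd (p n))" for n using p(1) gen_R[of "fst (p n)" "snd (p n)"] by simp
  qed
  then show "l \<in> generator_graph U" using R_gen[of "fst l" "snd l"] by simp
qed

lemma gen_unique: assumes "(x, y1) \<in> generator_graph U" "(x, y2) \<in> generator_graph U" shows "y1 = y2"
proof -
  have "((\<lambda>h. (1 / h) *\<^sub>R (U h x - x)) \<longlongrightarrow> y1) (at_right 0)" "((\<lambda>h. (1 / h) *\<^sub>R (U h x - x)) \<longlongrightarrow> y2) (at_right 0)"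
    using assms by (simp_all add: generator_graph_def)
  from tendsto_unique[OF trivial_limit_at_right_real this] show ?thesis .
qed

lemma R_diff: "R x1 y1 \<Longrightarrow> R x2 y2 \<Longrightarrow> R (x1 - x2) (y1 - y2)"
  unfolding R_def
proof (intro allI impI)
  fix h :: real assume a: "\<forall>h>0. U h x1 - x1 = integral {0..h} (\<lambda>s. U s y1)"
    "\<forall>h>0. U h x2 - x2 = integral {0..h} (\<lambda>s. U s y2)" and h: "h > 0"
  have "U h (x1 - x2) - (x1 - x2) = (U h x1 - x1) - (U h x2 - x2)" using h by (simp add: U_diff)
  also have "\<dots> = integral {0..h} (\<lambda>s. U s y1) - integral {0..h} (\<lambda>s. U s y2)" using a h by simp
  also have "\<dots> = integral {0..h} (\<lambda>s. U s (y1 - y2))"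
    by (subst integral_diff[symmetric]) (auto intro!: int_ok integral_cong simp: U_diff)
  finally show "U h (x1 - x2) - (x1 - x2) = integral {0..h} (\<lambda>s. U s (y1 - y2))" .
qed

lemma R_scaleR: "R x y \<Longrightarrow> R (r *\<^sub>R x) (r *\<^sub>R y)"
  unfolding R_def
proof (intro allI impI)
  fix h :: real assume a: "\<forall>h>0. U h x - x = integral {0..h} (\<lambda>s. U s y)" and h: "h > 0"
  have "U h (r *\<^sub>R x) - r *\<^sub>R x = r *\<^sub>R (U h x - x)" using h by (simp add: U_scaleR algebra_simps)
  also have "\<dots> = r *\<^sub>R integral {0..h} (\<lambda>s. U s y)" using a h by simp
  also have "\<dots> = integral {0..h} (\<lambda>s. U s (r *\<^sub>R y))"
  proof -
    have "integral {0..h} (\<lambda>s. U s (r *\<^sub>R y)) = integral {0..h} (\<lambda>s. r *\<^sub>R U s y)"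
      by (rule integral_cong) (simp add: U_scaleR)
    then show ?thesis by simp
  qed
  finally show "U h (r *\<^sub>R x) - r *\<^sub>R x = integral {0..h} (\<lambda>s. U s (r *\<^sub>R y))" .
qed

lemma dense_lim: "((\<lambda>h. (1/h) *\<^sub>R integral {0..h} (\<lambda>s. U s y)) \<longlongrightarrow> y) (at_right 0)"
  using mean_limit[OF cont, of 0] by simp

lemma dense_in: "h > 0 \<Longrightarrow> ((1/h) *\<^sub>R integral {0..h} (\<lambda>s. U s y), (1/h) *\<^sub>R (U h y - y)) \<in> generator_graph U"
  by (intro R_gen R_scaleR INT) simp

lemma adj_prop: "(z, a) \<in> adjoint_graph G \<Longrightarrow> (x, v) \<in> G \<Longrightarrow> cinner v z = cinner x a"
proof -
  assume A: "(z, a) \<in> adjoint_graph G" "(x, v) \<in> G"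
  from A(1) have "\<forall>p\<in>G. (case p of (x, v) \<Rightarrow> cinner v z = cinner x a)" by (simp add: adjoint_graph_def)
  from bspec[OF this A(2)] show ?thesis by simp
qed

lemma adjoint_unique:
  assumes "(z, a1) \<in> adjoint_graph (generator_graph U)" "(z, a2) \<in> adjoint_graph (generator_graph U)"
  shows "a1 = a2"
proof -
  have o: "cinner x (a1 - a2) = 0" if "(x, v) \<in> generator_graph U" for x v
    using adj_prop[OF assms(1) that] adj_prop[OF assms(2) that] by (simp add: cinner_diff_right)
  have "cinner y (a1 - a2) = 0" for y
  proof -
    have "((\<lambda>h. cinner ((1/h) *\<^sub>R integral {0..h} (\<lambda>s. U s y)) (a1 - a2)) \<longlongrightarrow> cinner y (a1 - a2)) (at_right 0)"
      by (rule bounded_linear.tendsto[OF bounded_linear_cinner_left dense_lim])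
    moreover have ev: "\<forall>\<^sub>F h in at_right 0. cinner ((1/h) *\<^sub>R integral {0..h} (\<lambda>s. U s y)) (a1 - a2) = 0"
      unfolding eventually_at_right_field by (auto intro!: exI[of _ 1] o dense_in)
    ultimately have "((\<lambda>h. 0) \<longlongrightarrow> cinner y (a1 - a2)) (at_right (0::real))"
      by (simp only: tendsto_cong[OF ev])
    from tendsto_unique[OF trivial_limit_at_right_real this tendsto_const] show ?thesis by simp
  qed
  then show ?thesis using cinner_eq_zero_iff[of "a1 - a2"] by simp
qed

end


lemma int_shift: "integral {a..b} (\<lambda>r. g (r - c)) = integral {a-c..b-c} (g::real \<Rightarrow> 'a::real_normed_vector)"
  using integral_shift_real_ivl[where f=g and a="a-c" and b="b-c" and c="-c"] by simp

lemma int_reflect: "integral {a..b} (\<lambda>s. g (c - s)) = integral {c-b..c-a} (g::real \<Rightarrow> 'a::real_normed_vector)"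
proof -
  have "integral {a..b} (\<lambda>s. g (c - s)) = integral {-b..-a} (\<lambda>x. g (c - (- x)))"
    using Henstock_Kurzweil_Integration.integral_reflect_real[where f="\<lambda>s. g (c - s)" and a=a and b=b] by simp
  also have "\<dots> = integral {-b..-a} (\<lambda>x. g (x + c))" by (simp add: add.commute)
  also have "\<dots> = integral {c-b..c-a} g"
    using integral_shift_real_ivl[where f=g and a="c-b" and b="c-a" and c="c"] by simp
  finally show ?thesis .
qed

lemma cont_comp2:
  assumes k: "continuous_on ({0..t} \<times> {0..t}) (\<lambda>(r,s). k r s)"
    and f: "continuous_on X f" and g: "continuous_on X g"
    and fg: "\<And>x. x \<in> X \<Longrightarrow> f x \<in> {0..t} \<and> g x \<in> {0..t}"
  shows "continuous_on X (\<lambda>x. k (f x) (g x))"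
proof -
  have "continuous_on X (\<lambda>x. (\<lambda>(r,s). k r s) (f x, g x))"
    by (rule continuous_on_compose2[OF k continuous_on_Pair[OF f g]]) (use fg in auto)
  then show ?thesis by simp
qed

lemma ibp:
  fixes m :: "real \<Rightarrow> 'a::banach"
  assumes t: "t \<ge> 0" and m: "continuous_on {0..t} m"
  shows "integral {0..t} (\<lambda>r. (t - r) *\<^sub>R m r) = integral {0..t} (\<lambda>s. integral {0..s} m)"
proof -
  define D where "D \<tau> = \<tau> *\<^sub>R integral {0..\<tau>} m - integral {0..\<tau>} (\<lambda>r. r *\<^sub>R m r) - integral {0..\<tau>} (\<lambda>s. integral {0..s} m)" for \<tau>
  have cm: "continuous_on {0..t} (\<lambda>r. r *\<^sub>R m r)" by (intro continuous_intros m)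
  have cI: "continuous_on {0..t} (\<lambda>s. integral {0..s} m)"
    by (rule indefinite_integral_continuous_1[OF cont_int[OF m]])
  have "(D has_vector_derivative 0) (at \<tau> within {0..t})" if \<tau>: "\<tau> \<in> {0..t}" for \<tau>
  proof -
    have d1: "((\<lambda>u. integral {0..u} m) has_vector_derivative m \<tau>) (at \<tau> within {0..t})"
      by (rule integral_has_vector_derivative[OF m \<tau>])
    have d2: "((\<lambda>u. integral {0..u} (\<lambda>r. r *\<^sub>R m r)) has_vector_derivative \<tau> *\<^sub>R m \<tau>) (at \<tau> within {0..t})"
      by (rule integral_has_vector_derivative[OF cm \<tau>])
    have d3: "((\<lambda>u. integral {0..u} (\<lambda>s. integral {0..s} m)) has_vector_derivative integral {0..\<tau>} m) (at \<tau> within {0..t})"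
      by (rule integral_has_vector_derivative[OF cI \<tau>])
    have d0: "((\<lambda>u. u) has_field_derivative 1) (at \<tau> within {0..t})" by (rule DERIV_ident)
    have "(D has_vector_derivative (\<tau> *\<^sub>R m \<tau> + 1 *\<^sub>R integral {0..\<tau>} m - \<tau> *\<^sub>R m \<tau> - integral {0..\<tau>} m)) (at \<tau> within {0..t})"
      unfolding D_def by (intro has_vector_derivative_diff has_vector_derivative_scaleR d0 d1 d2 d3)
    then show ?thesis by simp
  qed
  then obtain c where c: "\<And>x. x \<in> {0..t} \<Longrightarrow> D x = c"
    using has_vector_derivative_zero_constant[of "{0..t}" D] by (metis convex_real_interval(5))
  have "D t = D 0" using c[of t] c[of 0] t by simp
  then have "t *\<^sub>R integral {0..t} m - integral {0..t} (\<lambda>r. r *\<^sub>R m r) = integral {0..t} (\<lambda>s. integral {0..s} m)"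
    by (simp add: D_def)
  moreover have "integral {0..t} (\<lambda>r. (t - r) *\<^sub>R m r) = t *\<^sub>R integral {0..t} m - integral {0..t} (\<lambda>r. r *\<^sub>R m r)"
  proof -
    have "integral {0..t} (\<lambda>r. (t - r) *\<^sub>R m r) = integral {0..t} (\<lambda>r. t *\<^sub>R m r - r *\<^sub>R m r)"
      by (simp add: scaleR_diff_left)
    also have "\<dots> = integral {0..t} (\<lambda>r. t *\<^sub>R m r) - integral {0..t} (\<lambda>r. r *\<^sub>R m r)"
      by (rule integral_diff) (auto intro!: cont_int continuous_intros m)
    finally show ?thesis by simp
  qed
  ultimately show ?thesis by simp
qed

lemma tri:
  fixes k :: "real \<Rightarrow> real \<Rightarrow> 'a::banach"
  assumes t: "t \<ge> 0" and k: "continuous_on ({0..t} \<times> {0..t}) (\<lambda>(r,s). k r s)"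
  shows "integral {0..t} (\<lambda>r. integral {0..r} (\<lambda>s. k r s)) = integral {0..t} (\<lambda>s. integral {s..t} (\<lambda>r. k r s))"
proof -
  define kt where "kt r s = k r (min s r)" for r s
  have ckt: "continuous_on ({0..t} \<times> {0..t}) (\<lambda>(r,s). kt r s)"
    unfolding kt_def case_prod_unfold
    by (rule cont_comp2[OF k]) (auto intro!: continuous_intros)
  have kr: "continuous_on {0..t} (\<lambda>s. k r s)" if "r \<in> {0..t}" for r
    by (rule cont_comp2[OF k]) (use that in \<open>auto intro!: continuous_intros\<close>)
  have ks: "continuous_on {0..t} (\<lambda>r. k r s)" if "s \<in> {0..t}" for s
    by (rule cont_comp2[OF k]) (use that in \<open>auto intro!: continuous_intros\<close>)
  have ktr: "continuous_on {0..t} (\<lambda>s. kt r s)" if "r \<in> {0..t}" for r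
    unfolding kt_def by (rule cont_comp2[OF k]) (use that in \<open>auto intro!: continuous_intros\<close>)
  have kts: "continuous_on {0..t} (\<lambda>r. kt r s)" if "s \<in> {0..t}" for s
    unfolding kt_def by (rule cont_comp2[OF k]) (use that in \<open>auto intro!: continuous_intros\<close>)
  have cm: "continuous_on {0..t} (\<lambda>r. k r r)"
    by (rule cont_comp2[OF k]) (auto intro!: continuous_intros)
  have swap: "integral {0..t} (\<lambda>r. integral {0..t} (\<lambda>s. kt r s)) = integral {0..t} (\<lambda>s. integral {0..t} (\<lambda>r. kt r s))"
    using integral_swap_continuous[of 0 0 t t kt] ckt by (simp add: cbox_Pair_eq)
  have L: "integral {0..t} (\<lambda>s. kt r s) = integral {0..r} (\<lambda>s. k r s) + (t - r) *\<^sub>R k r r" if r: "r \<in> {0..t}" for r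
  proof -
    have "integral {0..t} (\<lambda>s. kt r s) = integral {0..r} (\<lambda>s. kt r s) + integral {r..t} (\<lambda>s. kt r s)"
      by (rule Henstock_Kurzweil_Integration.integral_combine[symmetric]) (use r cont_int[OF ktr[OF r]] in auto)
    moreover have "integral {0..r} (\<lambda>s. kt r s) = integral {0..r} (\<lambda>s. k r s)"
      by (rule integral_cong) (auto simp: kt_def)
    moreover have "integral {r..t} (\<lambda>s. kt r s) = integral {r..t} (\<lambda>s. k r r)"
      by (rule integral_cong) (auto simp: kt_def)
    ultimately show ?thesis using r by simp
  qed
  have Rr: "integral {0..t} (\<lambda>r. kt r s) = integral {0..s} (\<lambda>r. k r r) + integral {s..t} (\<lambda>r. k r s)" if s: "s \<in> {0..t}" for s
  proof -
    have "integral {0..t} (\<lambda>r. kt r s) = integral {0..s} (\<lambda>r. kt r s) + integral {s..t} (\<lambda>r. kt r s)"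
      by (rule Henstock_Kurzweil_Integration.integral_combine[symmetric]) (use s cont_int[OF kts[OF s]] in auto)
    moreover have "integral {0..s} (\<lambda>r. kt r s) = integral {0..s} (\<lambda>r. k r r)"
      by (rule integral_cong) (auto simp: kt_def)
    moreover have "integral {s..t} (\<lambda>r. kt r s) = integral {s..t} (\<lambda>r. k r s)"
      by (rule integral_cong) (auto simp: kt_def)
    ultimately show ?thesis by simp
  qed
  have i1: "(\<lambda>r. integral {0..t} (\<lambda>s. kt r s)) integrable_on {0..t}"
    using integral_integrable_2dim[of 0 0 t t "\<lambda>(r,s). kt r s"] ckt by (simp add: cbox_Pair_eq)
  have i2: "(\<lambda>s. integral {0..t} (\<lambda>r. kt r s)) integrable_on {0..t}"
  proof -
    have "continuous_on ({0..t} \<times> {0..t}) (\<lambda>(s,r). kt r s)"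
    proof -
      have sub: "prod.swap ` ({0..t} \<times> {0..t}) \<subseteq> {0..t} \<times> {0..t}" by auto
      show ?thesis
        using continuous_on_compose2[OF ckt continuous_on_swap[of "{0..t} \<times> {0..t}"] sub]
        by (simp add: case_prod_unfold)
    qed
    then show ?thesis
      using integral_integrable_2dim[of 0 0 t t "\<lambda>(s,r). kt r s"] by (simp add: cbox_Pair_eq)
  qed
  have iD: "(\<lambda>r. (t - r) *\<^sub>R k r r) integrable_on {0..t}" by (intro cont_int continuous_intros cm)
  have cB: "continuous_on {0..t} (\<lambda>s. integral {0..s} (\<lambda>r. k r r))"
    by (rule indefinite_integral_continuous_1[OF cont_int[OF cm]])
  have iB: "(\<lambda>s. integral {0..s} (\<lambda>r. k r r)) integrable_on {0..t}" by (rule cont_int[OF cB])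
  have iA: "(\<lambda>r. integral {0..r} (\<lambda>s. k r s)) integrable_on {0..t}"
    by (rule integrable_eq[OF integrable_diff[OF i1 iD]]) (simp add: L)
  have iC: "(\<lambda>s. integral {s..t} (\<lambda>r. k r s)) integrable_on {0..t}"
    by (rule integrable_eq[OF integrable_diff[OF i2 iB]]) (simp add: Rr)
  have "integral {0..t} (\<lambda>r. integral {0..t} (\<lambda>s. kt r s))
      = integral {0..t} (\<lambda>r. integral {0..r} (\<lambda>s. k r s) + (t - r) *\<^sub>R k r r)"
    by (rule integral_cong) (simp add: L)
  also have "\<dots> = integral {0..t} (\<lambda>r. integral {0..r} (\<lambda>s. k r s)) + integral {0..t} (\<lambda>r. (t - r) *\<^sub>R k r r)"
    by (rule integral_add[OF iA iD])
  finally have e1: "integral {0..t} (\<lambda>r. integral {0..t} (\<lambda>s. kt r s))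
      = integral {0..t} (\<lambda>r. integral {0..r} (\<lambda>s. k r s)) + integral {0..t} (\<lambda>s. integral {0..s} (\<lambda>r. k r r))"
    using ibp[OF t cm] by simp
  have "integral {0..t} (\<lambda>s. integral {0..t} (\<lambda>r. kt r s))
      = integral {0..t} (\<lambda>s. integral {0..s} (\<lambda>r. k r r) + integral {s..t} (\<lambda>r. k r s))"
    by (rule integral_cong) (simp add: Rr)
  also have "\<dots> = integral {0..t} (\<lambda>s. integral {0..s} (\<lambda>r. k r r)) + integral {0..t} (\<lambda>s. integral {s..t} (\<lambda>r. k r s))"
    by (rule integral_add[OF iB iC])
  finally have e2: "integral {0..t} (\<lambda>s. integral {0..t} (\<lambda>r. kt r s))
      = integral {0..t} (\<lambda>s. integral {0..s} (\<lambda>r. k r r)) + integral {0..t} (\<lambda>s. integral {s..t} (\<lambda>r. k r s))" .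
  from e1 e2 swap show ?thesis by simp
qed



lemma cont_ext: assumes f: "continuous_on {0..} f" shows "continuous_on UNIV (\<lambda>\<tau>::real. f (max \<tau> 0))"
  by (rule continuous_on_compose2[OF f]) (auto intro!: continuous_intros)

lemma conv:
  fixes f :: "real \<Rightarrow> 'b::banach" and G :: "real \<Rightarrow> 'c::banach" and prod :: "'b \<Rightarrow> 'c \<Rightarrow> 'd::banach"
  assumes bb: "bounded_bilinear prod" and f: "continuous_on {0..} f" and G: "continuous_on {0..} G" and t: "t \<ge> 0"
  shows "integral {0..t} (\<lambda>r. integral {0..r} (\<lambda>s. prod (f (r - s)) (G s)))
       = integral {0..t} (\<lambda>s. prod (f (t - s)) (integral {0..s} G))"
proof -
  define fe where "fe \<tau> = f (max \<tau> 0)" for \<tau>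
  have cfe: "continuous_on UNIV fe" unfolding fe_def by (rule cont_ext[OF f])
  have fe_eq: "\<tau> \<ge> 0 \<Longrightarrow> fe \<tau> = f \<tau>" for \<tau> by (simp add: fe_def)
  have cG: "continuous_on {0..t} G" by (rule continuous_on_subset[OF G]) auto
  have cfe': "continuous_on S (\<lambda>x. fe (h x))" if "continuous_on S h" for S h
    by (rule continuous_on_compose2[OF cfe that]) auto
  have k1: "continuous_on ({0..t} \<times> {0..t}) (\<lambda>(r,s). prod (fe (r - s)) (G s))"
    unfolding case_prod_unfold
    by (intro bounded_bilinear.continuous_on[OF bb] cfe' continuous_intros continuous_on_compose2[OF cG]) auto
  have k2: "continuous_on ({0..t} \<times> {0..t}) (\<lambda>(s,\<sigma>). prod (fe (t - s)) (G \<sigma>))"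
    unfolding case_prod_unfold
    by (intro bounded_bilinear.continuous_on[OF bb] cfe' continuous_intros continuous_on_compose2[OF cG]) auto
  have ife: "(\<lambda>r. fe (h r)) integrable_on {a..b}" if "continuous_on {a..b} h" for a b :: real and h :: "real \<Rightarrow> real"
    using cfe'[OF that] by (rule cont_int)
  have "integral {0..t} (\<lambda>r. integral {0..r} (\<lambda>s. prod (f (r - s)) (G s)))
      = integral {0..t} (\<lambda>r. integral {0..r} (\<lambda>s. prod (fe (r - s)) (G s)))"
    by (intro integral_cong) (simp add: fe_eq)
  also have "\<dots> = integral {0..t} (\<lambda>s. integral {s..t} (\<lambda>r. prod (fe (r - s)) (G s)))"
    by (rule tri[OF t k1])
  also have "\<dots> = integral {0..t} (\<lambda>s. prod (integral {0..t-s} f) (G s))"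
  proof (rule integral_cong)
    fix s assume s: "s \<in> {0..t}"
    have "integral {s..t} (\<lambda>r. prod (fe (r - s)) (G s)) = prod (integral {s..t} (\<lambda>r. fe (r - s))) (G s)"
      by (rule integral_bl[OF bounded_bilinear.bounded_linear_left[OF bb] ife, symmetric])
         (intro continuous_intros)
    also have "integral {s..t} (\<lambda>r. fe (r - s)) = integral {0..t-s} fe" by (simp add: int_shift)
    also have "\<dots> = integral {0..t-s} f" by (rule integral_cong) (simp add: fe_eq)
    finally show "integral {s..t} (\<lambda>r. prod (fe (r - s)) (G s)) = prod (integral {0..t-s} f) (G s)" .
  qed
  finally have L: "integral {0..t} (\<lambda>r. integral {0..r} (\<lambda>s. prod (f (r - s)) (G s)))
      = integral {0..t} (\<lambda>s. prod (integral {0..t-s} f) (G s))" .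
  have "integral {0..t} (\<lambda>s. prod (f (t - s)) (integral {0..s} G))
      = integral {0..t} (\<lambda>s. integral {0..s} (\<lambda>\<sigma>. prod (fe (t - s)) (G \<sigma>)))"
  proof (rule integral_cong)
    fix s assume s: "s \<in> {0..t}"
    have "prod (f (t - s)) (integral {0..s} G) = integral {0..s} (\<lambda>\<sigma>. prod (f (t - s)) (G \<sigma>))"
      by (rule integral_bl[OF bounded_bilinear.bounded_linear_right[OF bb] cont_int])
         (rule continuous_on_subset[OF G], auto)
    then show "prod (f (t - s)) (integral {0..s} G) = integral {0..s} (\<lambda>\<sigma>. prod (fe (t - s)) (G \<sigma>))"
      using s by (simp add: fe_eq)
  qed
  also have "\<dots> = integral {0..t} (\<lambda>\<sigma>. integral {\<sigma>..t} (\<lambda>s. prod (fe (t - s)) (G \<sigma>)))"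
    by (rule tri[OF t k2])
  also have "\<dots> = integral {0..t} (\<lambda>s. prod (integral {0..t-s} f) (G s))"
  proof (rule integral_cong)
    fix \<sigma> assume s: "\<sigma> \<in> {0..t}"
    have "integral {\<sigma>..t} (\<lambda>s. prod (fe (t - s)) (G \<sigma>)) = prod (integral {\<sigma>..t} (\<lambda>s. fe (t - s))) (G \<sigma>)"
      by (rule integral_bl[OF bounded_bilinear.bounded_linear_left[OF bb] ife, symmetric])
         (intro continuous_intros)
    also have "integral {\<sigma>..t} (\<lambda>s. fe (t - s)) = integral {0..t-\<sigma>} fe" by (simp add: int_reflect)
    also have "\<dots> = integral {0..t-\<sigma>} f" by (rule integral_cong) (simp add: fe_eq)
    finally show "integral {\<sigma>..t} (\<lambda>s. prod (fe (t - s)) (G \<sigma>)) = prod (integral {0..t-\<sigma>} f) (G \<sigma>)" .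
  qed
  finally show ?thesis using L by simp
qed

lemma conv_cont:
  fixes f :: "real \<Rightarrow> 'b::banach" and G :: "real \<Rightarrow> 'c::banach" and prod :: "'b \<Rightarrow> 'c \<Rightarrow> 'd::banach"
  assumes bb: "bounded_bilinear prod" and f: "continuous_on {0..} f" and G: "continuous_on {0..} G"
  shows "continuous_on {0..} (\<lambda>t. integral {0..t} (\<lambda>s. prod (f (t - s)) (G s)))"
proof -
  define fe where "fe \<tau> = f (max \<tau> 0)" for \<tau>
  define Ge where "Ge \<tau> = G (max \<tau> 0)" for \<tau>
  have cfe: "continuous_on UNIV fe" unfolding fe_def by (rule cont_ext[OF f])
  have cGe: "continuous_on UNIV Ge" unfolding Ge_def by (rule cont_ext[OF G])
  define H where "H t = t *\<^sub>R integral (cbox 0 1) (\<lambda>\<theta>. prod (fe (t - t * \<theta>)) (Ge (t * \<theta>)))" for t :: real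
  have "continuous_on UNIV (\<lambda>t. integral (cbox 0 1) (\<lambda>\<theta>. prod (fe (t - t * \<theta>)) (Ge (t * \<theta>))))"
  proof (rule integral_continuous_on_param)
    show "continuous_on (UNIV \<times> cbox 0 1) (\<lambda>(t, \<theta>). prod (fe (t - t * \<theta>)) (Ge (t * \<theta>)))"
      unfolding case_prod_unfold
      by (intro bounded_bilinear.continuous_on[OF bb] continuous_on_compose2[OF cfe]
          continuous_on_compose2[OF cGe] continuous_intros) auto
  qed
  then have cH: "continuous_on {0..} H" unfolding H_def
    by (intro continuous_intros) (auto intro: continuous_on_subset)
  have "H t = integral {0..t} (\<lambda>s. prod (f (t - s)) (G s))" if t: "t \<ge> 0" for t
  proof (cases "t = 0")
    case True then show ?thesis by (simp add: H_def)
  next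
    case False
    then have tp: "t > 0" using t by simp
    have "integral ((\<lambda>x. x / t) ` {0..t}) (\<lambda>x. (\<lambda>s. prod (fe (t - s)) (Ge s)) (t * x))
        = (1 / \<bar>t\<bar>) *\<^sub>R integral {0..t} (\<lambda>s. prod (fe (t - s)) (Ge s))"
      by (rule integral_stretch_real) (use tp in simp)
    moreover have "(\<lambda>x. x / t) ` {0..t} = cbox 0 1" using tp by simp
    moreover have "integral {0..t} (\<lambda>s. prod (fe (t - s)) (Ge s)) = integral {0..t} (\<lambda>s. prod (f (t - s)) (G s))"
      by (rule integral_cong) (simp add: fe_def Ge_def)
    ultimately show ?thesis using tp by (simp add: H_def)
  qed
  then show ?thesis using continuous_on_eq[OF cH] by simp
qed

lemma ode_zero:
  fixes g :: "real \<Rightarrow> complex"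
  assumes g: "continuous_on {0..} g" and eq: "\<And>t. t \<ge> 0 \<Longrightarrow> g t = b * integral {0..t} g"
    and T: "T \<ge> 0"
  shows "g T = 0"
proof -
  define G where "G \<tau> = integral {0..\<tau>} g" for \<tau>
  define E where "E \<tau> = exp (- b * of_real \<tau>)" for \<tau> :: real
  have gT: "continuous_on {0..T} g" by (rule continuous_on_subset[OF g]) auto
  have "((\<lambda>\<tau>. E \<tau> * G \<tau>) has_vector_derivative 0) (at \<tau> within {0..T})" if \<tau>: "\<tau> \<in> {0..T}" for \<tau>
  proof -
    have dG: "(G has_vector_derivative g \<tau>) (at \<tau> within {0..T})"
      unfolding G_def by (rule integral_has_vector_derivative[OF gT \<tau>])
    have "((\<lambda>w. exp (- b * w)) has_field_derivative (exp (- b * of_real \<tau>) * (- b))) (at (of_real \<tau>))"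
      by (auto intro!: derivative_eq_intros)
    then have dE: "(E has_vector_derivative (exp (- b * of_real \<tau>) * (- b))) (at \<tau> within {0..T})"
      unfolding E_def by (rule has_vector_derivative_real_field)
    have "((\<lambda>\<tau>. E \<tau> * G \<tau>) has_vector_derivative (E \<tau> * g \<tau> + (exp (- b * of_real \<tau>) * (- b)) * G \<tau>)) (at \<tau> within {0..T})"
      by (rule has_vector_derivative_mult[OF dE dG])
    moreover have "E \<tau> * g \<tau> + (exp (- b * of_real \<tau>) * (- b)) * G \<tau> = 0"
      using eq[of \<tau>] \<tau> by (simp add: E_def G_def algebra_simps)
    ultimately show ?thesis by simp
  qed
  then obtain c where c: "\<And>x. x \<in> {0..T} \<Longrightarrow> E x * G x = c"
    using has_vector_derivative_zero_constant[of "{0..T}" "\<lambda>\<tau>. E \<tau> * G \<tau>"] by (metis convex_real_interval(5))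
  have "E T * G T = E 0 * G 0" using c[of T] c[of 0] T by simp
  then have "G T = 0" by (simp add: E_def G_def)
  then show ?thesis using eq[OF T] by (simp add: G_def)
qed



lemma bl_functional_scaleC:
  assumes "bounded_linear (l::'a::chilbert \<Rightarrow> complex)"
  shows "bounded_linear (\<lambda>v. l v *\<^sub>C (z::'a))"
  using bounded_linear_compose[OF bounded_bilinear.bounded_linear_left[OF bounded_bilinear_scaleC, where b=z] assms]
  by (simp add: o_def)

lemma projP_alt: "projP z v = (cinner v z / cinner z z) *\<^sub>C z"
  by (simp add: projP_def)

lemma projP_bl: "bounded_linear (projP (z::'a::chilbert))"
proof -
  have "bounded_linear (\<lambda>v::'a. cinner v z / cinner z z)"
    using bounded_linear_compose[OF bounded_linear_divide[of "cinner z z"] bounded_linear_cinner_left[of z]]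
    by (simp add: o_def)
  from bl_functional_scaleC[OF this, of z] show ?thesis unfolding projP_def[abs_def] by simp
qed

lemma projQ_bl: "bounded_linear (projQ (z::'a::chilbert))"
  unfolding projQ_def[abs_def] by (intro bounded_linear_sub bounded_linear_ident projP_bl)

context
  fixes z :: "'a::chilbert"
  assumes z: "z \<noteq> 0"
begin

lemma czz: "cinner z z \<noteq> 0" using z cinner_eq_zero_iff by blast

lemma projP_z: "projP z z = z" using czz by (simp add: projP_def scaleC_one)
lemma projQ_z: "projQ z z = 0" by (simp add: projQ_def projP_z)

lemma cinner_projQ_z: "cinner (projQ z v) z = 0"
  using czz by (simp add: projQ_def projP_def cinner_diff_left cinner_scaleC_left)

lemma projP_fix0: "cinner v z = 0 \<Longrightarrow> projP z v = 0"
  by (simp add: projP_def)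

lemma projQ_fix: "cinner v z = 0 \<Longrightarrow> projQ z v = v"
  by (simp add: projQ_def projP_fix0)

lemma projQ_idem: "projQ z (projQ z v) = projQ z v"
  by (rule projQ_fix[OF cinner_projQ_z])

lemma projQ_projP: "projQ z (projP z v) = 0"
proof -
  have "projQ z (projP z v) = (cinner v z / cinner z z) *\<^sub>C projQ z z"
    unfolding projP_def projQ_def by (simp add: cinner_scaleC_left projP_def scaleC_scaleC scaleC_diff_right)
  then show ?thesis by (simp add: projQ_z)
qed

lemma projQ_scaleC: "projQ z (k *\<^sub>C v) = k *\<^sub>C projQ z v"
  by (simp add: projQ_def projP_def cinner_scaleC_left scaleC_diff_right scaleC_scaleC)

lemma x_decomp: "v = projP z v + projQ z v" by (simp add: projQ_def)

lemma cinner_decomp: "cinner y a = cnj (cinner a z / cinner z z) * cinner y z + cinner y (projQ z a)"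
proof -
  have "cinner y a = cinner y (projP z a + projQ z a)" using x_decomp[of a] by simp
  also have "\<dots> = cnj (cinner a z / cinner z z) * cinner y z + cinner y (projQ z a)"
    by (simp add: cinner_add_right projP_def cinner_scaleC_right)
  finally show ?thesis .
qed

end

context c0sg begin

lemma closed_QL:
  assumes z: "z \<noteq> 0" and a: "(z, a) \<in> adjoint_graph (generator_graph U)"
  shows "closed (QL_graph U z)"
  unfolding closed_sequential_limits
proof (intro allI impI, elim conjE)
  fix pn :: "nat \<Rightarrow> 'a \<times> 'a" and l
  assume pn: "\<forall>n. pn n \<in> QL_graph U z" and lim: "pn \<longlonglongrightarrow> l"
  define c where "c = cinner z z"
  have "\<forall>n. \<exists>y. (fst (pn n), y) \<in> generator_graph U \<and> snd (pn n) = projQ z y"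
  proof
    fix n
    from pn obtain x y where "pn n = (x, projQ z y)" "(x, y) \<in> generator_graph U"
      unfolding QL_graph_def by blast
    then show "\<exists>y. (fst (pn n), y) \<in> generator_graph U \<and> snd (pn n) = projQ z y" by auto
  qed
  from choice[OF this] obtain yn where yn: "\<And>n. (fst (pn n), yn n) \<in> generator_graph U" "\<And>n. snd (pn n) = projQ z (yn n)"
    by blast
  have fl: "(\<lambda>n. fst (pn n)) \<longlonglongrightarrow> fst l" by (intro tendsto_fst lim)
  have sl: "(\<lambda>n. snd (pn n)) \<longlonglongrightarrow> snd l" by (intro tendsto_snd lim)
  have blP: "bounded_linear (\<lambda>v. (cinner v a / c) *\<^sub>C z)"
    using bl_functional_scaleC[OF bounded_linear_compose[OF bounded_linear_divide[of c] bounded_linear_cinner_left[of a]], of z]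
    by (simp add: o_def)
  have ydec: "yn n = snd (pn n) + (cinner (fst (pn n)) a / c) *\<^sub>C z" for n
  proof -
    have "cinner (yn n) z = cinner (fst (pn n)) a" by (rule adj_prop[OF a yn(1)])
    then have "projP z (yn n) = (cinner (fst (pn n)) a / c) *\<^sub>C z" by (simp add: projP_def c_def)
    then show ?thesis using x_decomp[OF z, of "yn n"] yn(2)[of n] by (simp add: add.commute)
  qed
  define yl where "yl = snd l + (cinner (fst l) a / c) *\<^sub>C z"
  have ylim: "yn \<longlonglongrightarrow> yl" unfolding ydec yl_def
    by (intro tendsto_add sl bounded_linear.tendsto[OF blP fl])
  have tl: "(\<lambda>n. (fst (pn n), yn n)) \<longlonglongrightarrow> (fst l, yl)" by (intro tendsto_Pair fl ylim)
  have cg: "\<And>x l. (\<forall>n. x n \<in> generator_graph U) \<Longrightarrow> x \<longlonglongrightarrow> l \<Longrightarrow> l \<in> generator_graph U"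
    using closed_gen unfolding closed_sequential_limits by blast
  have g: "(fst l, yl) \<in> generator_graph U" by (rule cg[OF _ tl]) (simp add: yn(1))
  have "(\<lambda>n. projQ z (snd (pn n))) \<longlonglongrightarrow> projQ z (snd l)"
    by (rule bounded_linear.tendsto[OF projQ_bl sl])
  moreover have "(\<lambda>n. projQ z (snd (pn n))) = (\<lambda>n. snd (pn n))"
    using yn(2) by (simp add: projQ_idem[OF z])
  ultimately have "projQ z (snd l) = snd l" using sl LIMSEQ_unique by auto
  moreover have "projQ z yl = projQ z (snd l)"
    unfolding yl_def using linear_add[OF bounded_linear.linear[OF projQ_bl[of z]]]
    by (simp add: projQ_scaleC[OF z] projQ_z[OF z])
  ultimately have "projQ z yl = snd l" by simp
  with g show "l \<in> QL_graph U z" unfolding QL_graph_def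
    by (intro CollectI exI[of _ "fst l"] exI[of _ yl] conjI) auto
qed

end


lemma ci: "continuous_on {0..} (h::real \<Rightarrow> 'a::banach) \<Longrightarrow> h integrable_on {0..t}"
  by (rule cont_int, erule continuous_on_subset) auto

lemma integral_scaleC_const:
  assumes "(k::real \<Rightarrow> complex) integrable_on S"
  shows "integral S (\<lambda>s. k s *\<^sub>C (z::'a::chilbert)) = integral S k *\<^sub>C z"
  using integral_bl[OF bounded_bilinear.bounded_linear_left[OF bounded_bilinear_scaleC, where b=z] assms] by simp

lemma integral_cmult:
  "(g::real \<Rightarrow> complex) integrable_on S \<Longrightarrow> integral S (\<lambda>s. k * g s) = k * integral S g"
  using integral_bl[OF bounded_linear_mult_right[of k]] by simp

lemma integral_multc:
  "(g::real \<Rightarrow> complex) integrable_on S \<Longrightarrow> integral S (\<lambda>s. g s * k) = integral S g * k"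
  using integral_bl[OF bounded_linear_mult_left[of k]] by simp

theorem theorem2:
  fixes U :: "real \<Rightarrow> 'a::chilbert \<Rightarrow> 'a"
    and z x :: 'a
    and f :: "real \<Rightarrow> complex"
    and u :: "real \<Rightarrow> 'a"
  assumes U: "C0_semigroup U"
    and z_dom: "z \<in> Domain (adjoint_graph (generator_graph U))"
    and z_nz: "z \<noteq> 0"
    and f_cont: "continuous_on {0..} f"
    and f_volterra: "\<And>t. t \<ge> 0 \<Longrightarrow>
       f t = cinner (U t (projQ z x)) (projQ z (op_of (adjoint_graph (generator_graph U)) z)) / cinner z z
             - integral {0..t} (\<lambda>s. f (t - s) *
                 (cinner (U s z) (projQ z (op_of (adjoint_graph (generator_graph U)) z)) / cinner z z))"
    and u_def: "\<And>t. t \<ge> 0 \<Longrightarrow>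
       u t = projP z x + U t (projQ z x) - integral {0..t} (\<lambda>s. f (t - s) *\<^sub>C U s z)"
  shows "continuous_on {0..} u \<and>
    (\<forall>t\<ge>0. projQ z (integral {0..t} u) \<in> Domain (closure (QL_graph U z)) \<and>
            u t = x + op_of (closure (QL_graph U z)) (projQ z (integral {0..t} u)))"
proof -
  interpret c0sg U by (rule c0sg.intro[OF U])
  obtain a0 where a0: "(z, a0) \<in> adjoint_graph (generator_graph U)" using z_dom by auto
  define a where "a = op_of (adjoint_graph (generator_graph U)) z"
  have "a = a0" unfolding a_def op_of_def
    by (rule the_equality[where P="\<lambda>y. (z, y) \<in> adjoint_graph (generator_graph U)", OF a0])
       (rule adjoint_unique[OF _ a0])
  with a0 have a: "(z, a) \<in> adjoint_graph (generator_graph U)" by simp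
  define c where "c = cinner z z"
  have c0: "c \<noteq> 0" using czz[OF z_nz] by (simp add: c_def)
  define w where "w = projQ z x"
  define b where "b = projQ z a"
  define \<beta> where "\<beta> = cnj (cinner a z / c)"
  have dec: "cinner y a = \<beta> * cinner y z + cinner y b" for y
    unfolding \<beta>_def b_def c_def by (rule cinner_decomp[OF z_nz])
  have volt: "\<And>t. t \<ge> 0 \<Longrightarrow> f t = cinner (U t w) b / c - integral {0..t} (\<lambda>s. f (t - s) * (cinner (U s z) b / c))"
    using f_volterra by (simp add: w_def b_def a_def c_def)
  have E1: "cinner (U t y) z = cinner y z + integral {0..t} (\<lambda>s. cinner (U s y) a)" if t: "t \<ge> 0" for y t
  proof -
    have "(integral {0..t} (\<lambda>s. U s y), U t y - y) \<in> generator_graph U" by (rule R_gen[OF INT[OF t]])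
    from adj_prop[OF a this] have "cinner (U t y - y) z = cinner (integral {0..t} (\<lambda>s. U s y)) a" .
    also have "\<dots> = integral {0..t} (\<lambda>s. cinner (U s y) a)" by (rule integral_cinner_left[OF int_ok]) simp
    finally show ?thesis by (simp add: cinner_diff_left algebra_simps)
  qed
  have ccin: "continuous_on {0..} (\<lambda>s. cinner (U s y) v)" for y v
    by (rule continuous_on_compose2[OF linear_continuous_on[OF bounded_linear_cinner_left] cont]) auto
  define F where "F t = integral {0..t} (\<lambda>s. f (t - s) *\<^sub>C U s z)" for t
  have cF: "continuous_on {0..} F" unfolding F_def
    by (rule conv_cont[OF bounded_bilinear_scaleC f_cont cont])
  define gg where "gg t = cinner (U t w - F t) z" for t
  have cgg: "continuous_on {0..} gg" unfolding gg_def
    by (rule continuous_on_compose2[OF linear_continuous_on[OF bounded_linear_cinner_left]])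
       (auto intro!: continuous_intros cont cF)
  define mw where "mw s = cinner (U s w) z" for s
  define nw where "nw s = cinner (U s w) b" for s
  define p where "p s = cinner (U s z) z" for s
  define q where "q s = cinner (U s z) b" for s
  define cv where "cv h r = integral {0..r} (\<lambda>s. f (r - s) * h s)" for h :: "real \<Rightarrow> complex" and r
  have cmw: "continuous_on {0..} mw" unfolding mw_def by (rule ccin)
  have cnw: "continuous_on {0..} nw" unfolding nw_def by (rule ccin)
  have cp: "continuous_on {0..} p" unfolding p_def by (rule ccin)
  have cq: "continuous_on {0..} q" unfolding q_def by (rule ccin)
  have ccv: "continuous_on {0..} (cv h)" if "continuous_on {0..} h" for h
    unfolding cv_def by (rule conv_cont[OF bounded_bilinear_mult f_cont that])
  have cvconv: "integral {0..t} (cv h) = integral {0..t} (\<lambda>s. f (t - s) * integral {0..s} h)"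
    if "continuous_on {0..} h" "t \<ge> 0" for h t
    unfolding cv_def by (rule conv[OF bounded_bilinear_mult f_cont that])
  have cvi: "(\<lambda>s. f (r - s) * h s) integrable_on {0..r}" if "continuous_on {0..} h" for h r
  proof -
    have "continuous_on {0..r} (\<lambda>s. f (r - s))"
      by (rule continuous_on_compose2[OF f_cont]) (auto intro!: continuous_intros)
    moreover have "continuous_on {0..r} h" by (rule continuous_on_subset[OF that]) auto
    ultimately show ?thesis by (intro cont_int continuous_intros)
  qed
  have F1: "gg r = mw r - cv p r" if r: "r \<ge> 0" for r
  proof -
    have iF: "(\<lambda>s. f (r - s) *\<^sub>C U s z) integrable_on {0..r}"
    proof -
      have "continuous_on {0..r} (\<lambda>s. f (r - s))"
        by (rule continuous_on_compose2[OF f_cont]) (auto intro!: continuous_intros)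
      then show ?thesis
        by (intro cont_int bounded_bilinear.continuous_on[OF bounded_bilinear_scaleC] cont_sub) simp_all
    qed
    have "cinner (F r) z = integral {0..r} (\<lambda>s. cinner (f (r - s) *\<^sub>C U s z) z)"
      unfolding F_def by (rule integral_cinner_left[OF iF])
    also have "\<dots> = cv p r" unfolding cv_def p_def by (simp add: cinner_scaleC_left)
    finally show ?thesis by (simp add: gg_def mw_def cinner_diff_left)
  qed
  have Qw0: "cinner w z = 0" unfolding w_def by (rule cinner_projQ_z[OF z_nz])
  have F2: "mw r = \<beta> * integral {0..r} mw + integral {0..r} nw" if r: "r \<ge> 0" for r
  proof -
    have "mw r = integral {0..r} (\<lambda>s. cinner (U s w) a)" using E1[OF r, of w] Qw0 by (simp add: mw_def)
    also have "\<dots> = integral {0..r} (\<lambda>s. \<beta> * mw s + nw s)" by (simp add: dec mw_def nw_def)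
    also have "\<dots> = integral {0..r} (\<lambda>s. \<beta> * mw s) + integral {0..r} nw"
      by (rule integral_add[OF ci[OF continuous_on_mult[OF continuous_on_const cmw]] ci[OF cnw]])
    also have "integral {0..r} (\<lambda>s. \<beta> * mw s) = \<beta> * integral {0..r} mw"
      by (rule integral_cmult[OF ci[OF cmw]])
    finally show ?thesis .
  qed
  have F3: "p s = c + (\<beta> * integral {0..s} p + integral {0..s} q)" if s: "s \<ge> 0" for s
  proof -
    have "p s = c + integral {0..s} (\<lambda>\<sigma>. cinner (U \<sigma> z) a)" using E1[OF s, of z] by (simp add: p_def c_def)
    also have "integral {0..s} (\<lambda>\<sigma>. cinner (U \<sigma> z) a) = integral {0..s} (\<lambda>\<sigma>. \<beta> * p \<sigma> + q \<sigma>)"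
      by (simp add: dec p_def q_def)
    also have "\<dots> = integral {0..s} (\<lambda>\<sigma>. \<beta> * p \<sigma>) + integral {0..s} q"
      by (rule integral_add[OF ci[OF continuous_on_mult[OF continuous_on_const cp]] ci[OF cq]])
    also have "integral {0..s} (\<lambda>\<sigma>. \<beta> * p \<sigma>) = \<beta> * integral {0..s} p"
      by (rule integral_cmult[OF ci[OF cp]])
    finally show ?thesis .
  qed
  have F4: "nw r = c * f r + cv q r" if r: "r \<ge> 0" for r
  proof -
    have "integral {0..r} (\<lambda>s. f (r - s) * (cinner (U s z) b / c)) = cv q r / c"
    proof -
      have "integral {0..r} (\<lambda>s. f (r - s) * (cinner (U s z) b / c)) = integral {0..r} (\<lambda>s. f (r - s) * q s * (1 / c))"
        by (simp add: q_def)
      also have "\<dots> = cv q r * (1 / c)" unfolding cv_def by (rule integral_multc[OF cvi[OF cq]])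
      finally show ?thesis by simp
    qed
    with volt[OF r] have "f r = nw r / c - cv q r / c" by (simp add: nw_def)
    then show ?thesis using c0 by (simp add: field_simps)
  qed
  have ggeq: "gg t = \<beta> * integral {0..t} gg" if t: "t \<ge> 0" for t
  proof -
    define Pi where "Pi s = integral {0..s} p" for s
    define Qi where "Qi s = integral {0..s} q" for s
    define phi where "phi = integral {0..t} (\<lambda>s. f (t - s))"
    have cft: "continuous_on {0..t} (\<lambda>s. f (t - s))"
      by (rule continuous_on_compose2[OF f_cont]) (auto intro!: continuous_intros)
    have cPi: "continuous_on {0..t} Pi" unfolding Pi_def by (rule indefinite_integral_continuous_1[OF ci[OF cp]])
    have cQi: "continuous_on {0..t} Qi" unfolding Qi_def by (rule indefinite_integral_continuous_1[OF ci[OF cq]])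
    have iP: "(\<lambda>s. f (t - s) * Pi s) integrable_on {0..t}" by (intro cont_int continuous_intros cft cPi)
    have iQ: "(\<lambda>s. f (t - s) * Qi s) integrable_on {0..t}" by (intro cont_int continuous_intros cft cQi)
    have iPQ: "(\<lambda>s. \<beta> * (f (t - s) * Pi s)) integrable_on {0..t}" by (intro cont_int continuous_intros cft cPi)
    have iff: "(\<lambda>s. f (t - s)) integrable_on {0..t}" by (rule cont_int[OF cft])
    have phi_eq: "phi = integral {0..t} f" unfolding phi_def by (simp add: int_reflect)
    have Inw: "integral {0..t} nw = c * phi + integral {0..t} (\<lambda>s. f (t - s) * Qi s)"
    proof -
      have "integral {0..t} nw = integral {0..t} (\<lambda>r. c * f r + cv q r)"
        by (rule integral_cong) (simp add: F4)
      also have "\<dots> = integral {0..t} (\<lambda>r. c * f r) + integral {0..t} (cv q)"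
        by (rule integral_add[OF ci[OF continuous_on_mult[OF continuous_on_const f_cont]] ci[OF ccv[OF cq]]])
      also have "integral {0..t} (\<lambda>r. c * f r) = c * integral {0..t} f"
        by (rule integral_cmult[OF ci[OF f_cont]])
      also have "integral {0..t} (cv q) = integral {0..t} (\<lambda>s. f (t - s) * Qi s)"
        unfolding Qi_def by (rule cvconv[OF cq t])
      finally show ?thesis using phi_eq by simp
    qed
    have Icvp: "cv p t = c * phi + \<beta> * integral {0..t} (\<lambda>s. f (t - s) * Pi s) + integral {0..t} (\<lambda>s. f (t - s) * Qi s)"
    proof -
      have "cv p t = integral {0..t} (\<lambda>s. c * f (t - s) + \<beta> * (f (t - s) * Pi s) + f (t - s) * Qi s)"
        unfolding cv_def by (rule integral_cong) (simp add: F3 Pi_def Qi_def algebra_simps)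
      also have "\<dots> = integral {0..t} (\<lambda>s. c * f (t - s) + \<beta> * (f (t - s) * Pi s)) + integral {0..t} (\<lambda>s. f (t - s) * Qi s)"
        by (rule integral_add[OF _ iQ]) (intro cont_int continuous_intros cft cPi)
      also have "integral {0..t} (\<lambda>s. c * f (t - s) + \<beta> * (f (t - s) * Pi s))
          = integral {0..t} (\<lambda>s. c * f (t - s)) + integral {0..t} (\<lambda>s. \<beta> * (f (t - s) * Pi s))"
        by (rule integral_add[OF _ iPQ]) (intro cont_int continuous_intros cft)
      also have "integral {0..t} (\<lambda>s. c * f (t - s)) = c * phi"
        unfolding phi_def by (rule integral_cmult[OF iff])
      also have "integral {0..t} (\<lambda>s. \<beta> * (f (t - s) * Pi s)) = \<beta> * integral {0..t} (\<lambda>s. f (t - s) * Pi s)"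
        by (rule integral_cmult[OF iP])
      finally show ?thesis .
    qed
    have Igg: "integral {0..t} gg = integral {0..t} mw - integral {0..t} (\<lambda>s. f (t - s) * Pi s)"
    proof -
      have "integral {0..t} gg = integral {0..t} (\<lambda>r. mw r - cv p r)"
        by (rule integral_cong) (simp add: F1)
      also have "\<dots> = integral {0..t} mw - integral {0..t} (cv p)"
        by (rule integral_diff) (auto intro: ci cmw ccv cp)
      also have "integral {0..t} (cv p) = integral {0..t} (\<lambda>s. f (t - s) * Pi s)"
        unfolding Pi_def by (rule cvconv[OF cp t])
      finally show ?thesis .
    qed
    have "gg t = mw t - cv p t" by (rule F1[OF t])
    also have "\<dots> = \<beta> * integral {0..t} mw + integral {0..t} nw - cv p t" using F2[OF t] by simp
    also have "\<dots> = \<beta> * (integral {0..t} mw - integral {0..t} (\<lambda>s. f (t - s) * Pi s))"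
      unfolding Inw Icvp by (simp add: algebra_simps)
    also have "\<dots> = \<beta> * integral {0..t} gg" by (simp add: Igg)
    finally show ?thesis .
  qed
  have A: "cinner (U t w - F t) z = 0" if t: "t \<ge> 0" for t
    using ode_zero[OF cgg ggeq t] by (simp add: gg_def)
  have u_eq: "u t = projP z x + (U t w - F t)" if "t \<ge> 0" for t
    using u_def[OF that] by (simp add: F_def w_def algebra_simps)
  have cu: "continuous_on {0..} u"
  proof (rule continuous_on_eq)
    show "continuous_on {0..} (\<lambda>t. projP z x + (U t w - F t))" by (intro continuous_intros cont cF)
  qed (simp add: u_eq)
  have Qu: "projQ z (u t) = U t w - F t" if t: "t \<ge> 0" for t
    using u_eq[OF t] linear_add[OF bounded_linear.linear[OF projQ_bl[of z]]]
    by (simp add: projQ_projP[OF z_nz] projQ_fix[OF z_nz A[OF t]])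
  have clo: "closure (QL_graph U z) = QL_graph U z" by (rule closure_closed[OF closed_QL[OF z_nz a]])
  have main: "projQ z (integral {0..t} u) \<in> Domain (QL_graph U z) \<and>
            u t = x + op_of (QL_graph U z) (projQ z (integral {0..t} u))" if t: "t \<ge> 0" for t
  proof -
    define I where "I = integral {0..t} u"
    have QI: "projQ z I = integral {0..t} (\<lambda>s. U s w) - integral {0..t} F"
    proof -
      have "projQ z I = integral {0..t} (\<lambda>s. projQ z (u s))"
        unfolding I_def by (rule integral_bl[OF projQ_bl ci[OF cu]])
      also have "\<dots> = integral {0..t} (\<lambda>s. U s w - F s)" by (rule integral_cong) (simp add: Qu)
      also have "\<dots> = integral {0..t} (\<lambda>s. U s w) - integral {0..t} F"
        by (rule integral_diff[OF int_ok ci[OF cF]]) simp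
      finally show ?thesis .
    qed
    define V where "V s = integral {0..s} (\<lambda>\<sigma>. U \<sigma> z)" for s
    have convF: "integral {0..t} F = integral {0..t} (\<lambda>s. f (t - s) *\<^sub>C V s)"
      unfolding F_def V_def by (rule conv[OF bounded_bilinear_scaleC f_cont cont t])
    define Y2 where "Y2 = integral {0..t} (\<lambda>s. f (t - s) *\<^sub>C (U s z - z))"
    have cft: "continuous_on {0..t} (\<lambda>s. f (t - s))"
      by (rule continuous_on_compose2[OF f_cont]) (auto intro!: continuous_intros)
    have cV: "continuous_on {0..t} V" unfolding V_def
      by (rule indefinite_integral_continuous_1[OF int_ok]) simp
    have iV: "(\<lambda>s. f (t - s) *\<^sub>C V s) integrable_on {0..t}"
      by (intro cont_int bounded_bilinear.continuous_on[OF bounded_bilinear_scaleC] cft cV)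
    have R2: "R (integral {0..t} (\<lambda>s. f (t - s) *\<^sub>C V s)) Y2"
      unfolding R_def
    proof (intro allI impI)
      fix h :: real assume h: "h > 0"
      have iUV: "(\<lambda>s. U h (f (t - s) *\<^sub>C V s)) integrable_on {0..t}"
        using integrable_linear[OF iV bl[of h]] h by (simp add: o_def)
      have e1: "U h (integral {0..t} (\<lambda>s. f (t - s) *\<^sub>C V s)) = integral {0..t} (\<lambda>s. U h (f (t - s) *\<^sub>C V s))"
        by (rule integral_bl[OF bl iV]) (use h in simp)
      have "U h (integral {0..t} (\<lambda>s. f (t - s) *\<^sub>C V s)) - integral {0..t} (\<lambda>s. f (t - s) *\<^sub>C V s)
          = integral {0..t} (\<lambda>s. U h (f (t - s) *\<^sub>C V s) - f (t - s) *\<^sub>C V s)"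
        unfolding e1 by (rule integral_diff[OF iUV iV, symmetric])
      also have "\<dots> = integral {0..t} (\<lambda>s. f (t - s) *\<^sub>C integral {0..h} (\<lambda>\<sigma>. U \<sigma> (U s z - z)))"
      proof (rule integral_cong)
        fix s assume s: "s \<in> {0..t}"
        have "U h (V s) - V s = integral {0..h} (\<lambda>\<sigma>. U \<sigma> (U s z - z))"
          using INT[of s z] s h unfolding R_def V_def by auto
        then show "U h (f (t - s) *\<^sub>C V s) - f (t - s) *\<^sub>C V s = f (t - s) *\<^sub>C integral {0..h} (\<lambda>\<sigma>. U \<sigma> (U s z - z))"
          using h by (simp add: homC scaleC_diff_right[symmetric])
      qed
      also have "\<dots> = integral {0..t} (\<lambda>s. integral {0..h} (\<lambda>\<sigma>. f (t - s) *\<^sub>C (U (\<sigma> + s) z - U \<sigma> z)))"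
      proof (rule integral_cong)
        fix s assume s: "s \<in> {0..t}"
        have "f (t - s) *\<^sub>C integral {0..h} (\<lambda>\<sigma>. U \<sigma> (U s z - z)) = integral {0..h} (\<lambda>\<sigma>. f (t - s) *\<^sub>C U \<sigma> (U s z - z))"
          by (rule integral_scaleC[OF int_ok]) simp
        also have "\<dots> = integral {0..h} (\<lambda>\<sigma>. f (t - s) *\<^sub>C (U (\<sigma> + s) z - U \<sigma> z))"
          by (rule integral_cong) (use s in \<open>auto simp: U_diff Uadd\<close>)
        finally show "f (t - s) *\<^sub>C integral {0..h} (\<lambda>\<sigma>. U \<sigma> (U s z - z)) = integral {0..h} (\<lambda>\<sigma>. f (t - s) *\<^sub>C (U (\<sigma> + s) z - U \<sigma> z))" .
      qed
      also have "\<dots> = integral {0..h} (\<lambda>\<sigma>. integral {0..t} (\<lambda>s. f (t - s) *\<^sub>C (U (\<sigma> + s) z - U \<sigma> z)))"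
      proof -
        have "continuous_on (cbox (0, 0) (t, h)) (\<lambda>(s, \<sigma>). f (t - s) *\<^sub>C (U (\<sigma> + s) z - U \<sigma> z))"
          unfolding case_prod_unfold
          by (intro bounded_bilinear.continuous_on[OF bounded_bilinear_scaleC] continuous_on_compose2[OF f_cont]
              continuous_intros continuous_on_compose2[OF cont]) (auto simp: cbox_Pair_eq)
        from integral_swap_continuous[of 0 0 t h "\<lambda>s \<sigma>. f (t - s) *\<^sub>C (U (\<sigma> + s) z - U \<sigma> z)", OF this]
        show ?thesis by simp
      qed
      also have "\<dots> = integral {0..h} (\<lambda>\<sigma>. U \<sigma> Y2)"
      proof (rule integral_cong)
        fix \<sigma> assume \<sigma>: "\<sigma> \<in> {0..h}"
        have iY: "(\<lambda>s. f (t - s) *\<^sub>C (U s z - z)) integrable_on {0..t}"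
          by (intro cont_int bounded_bilinear.continuous_on[OF bounded_bilinear_scaleC] cft continuous_intros cont_sub) simp
        have "U \<sigma> Y2 = integral {0..t} (\<lambda>s. U \<sigma> (f (t - s) *\<^sub>C (U s z - z)))"
          unfolding Y2_def by (rule integral_bl[OF bl iY]) (use \<sigma> in simp)
        also have "\<dots> = integral {0..t} (\<lambda>s. f (t - s) *\<^sub>C (U (\<sigma> + s) z - U \<sigma> z))"
          by (rule integral_cong) (use \<sigma> in \<open>auto simp: homC U_diff Uadd\<close>)
        finally show "integral {0..t} (\<lambda>s. f (t - s) *\<^sub>C (U (\<sigma> + s) z - U \<sigma> z)) = U \<sigma> Y2" by simp
      qed
      finally show "U h (integral {0..t} (\<lambda>s. f (t - s) *\<^sub>C V s)) - integral {0..t} (\<lambda>s. f (t - s) *\<^sub>C V s)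
          = integral {0..h} (\<lambda>\<sigma>. U \<sigma> Y2)" .
    qed
    have R1: "R (integral {0..t} (\<lambda>s. U s w)) (U t w - w)" by (rule INT[OF t])
    have Rq: "R (projQ z I) (U t w - w - Y2)" using R_diff[OF R1 R2] QI convF by simp
    have gq: "(projQ z I, U t w - w - Y2) \<in> generator_graph U" by (rule R_gen[OF Rq])
    have Y2eq: "Y2 = F t - integral {0..t} (\<lambda>s. f (t - s)) *\<^sub>C z"
    proof -
      have "Y2 = integral {0..t} (\<lambda>s. f (t - s) *\<^sub>C U s z - f (t - s) *\<^sub>C z)"
        unfolding Y2_def by (simp add: scaleC_diff_right)
      also have "\<dots> = F t - integral {0..t} (\<lambda>s. f (t - s) *\<^sub>C z)" unfolding F_def
        by (rule integral_diff; rule cont_int;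
            intro bounded_bilinear.continuous_on[OF bounded_bilinear_scaleC] cft cont_sub continuous_intros) simp
      also have "integral {0..t} (\<lambda>s. f (t - s) *\<^sub>C z) = integral {0..t} (\<lambda>s. f (t - s)) *\<^sub>C z"
        by (rule integral_scaleC_const[OF cont_int[OF cft]])
      finally show ?thesis .
    qed
    have lin: "linear (projQ z)" by (rule bounded_linear.linear[OF projQ_bl])
    have yv: "projQ z (U t w - w - Y2) = u t - x"
    proof -
      have "U t w - w - Y2 = (U t w - F t) - w + integral {0..t} (\<lambda>s. f (t - s)) *\<^sub>C z"
        unfolding Y2eq by (simp add: algebra_simps)
      then have "projQ z (U t w - w - Y2) = projQ z ((U t w - F t) - w + integral {0..t} (\<lambda>s. f (t - s)) *\<^sub>C z)"
        by (rule arg_cong)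
      also have "\<dots> = projQ z (U t w - F t) - projQ z w + projQ z (integral {0..t} (\<lambda>s. f (t - s)) *\<^sub>C z)"
        by (simp only: linear_add[OF lin] linear_diff[OF lin])
      also have "\<dots> = (U t w - F t) - w"
        using projQ_idem[OF z_nz, of x]
        by (simp add: projQ_fix[OF z_nz A[OF t]] projQ_scaleC[OF z_nz] projQ_z[OF z_nz] flip: w_def)
      also have "\<dots> = u t - x"
      proof -
        have xd: "x = projP z x + w" unfolding w_def by (rule x_decomp[OF z_nz])
        show ?thesis unfolding u_eq[OF t] by (subst (2) xd) (simp add: algebra_simps)
      qed
      finally show ?thesis .
    qed
    have mem: "(projQ z I, u t - x) \<in> QL_graph U z"
      unfolding QL_graph_def using gq yv by (intro CollectI exI[of _ "projQ z I"] exI[of _ "U t w - w - Y2"] conjI) auto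
    have op: "op_of (QL_graph U z) (projQ z I) = u t - x"
      unfolding op_of_def
    proof (rule the_equality[where P="\<lambda>v. (projQ z I, v) \<in> QL_graph U z", OF mem])
      fix v assume "(projQ z I, v) \<in> QL_graph U z"
      then obtain y' where y': "(projQ z I, y') \<in> generator_graph U" "v = projQ z y'"
        unfolding QL_graph_def by blast
      have "y' = U t w - w - Y2" by (rule gen_unique[OF y'(1) gq])
      then show "v = u t - x" using y'(2) yv by simp
    qed
    show ?thesis using mem op unfolding I_def by (auto intro: DomainI)
  qed
  show ?thesis using cu main clo by simp
qed


end
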